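(* Let $\Phi(L,W,S,B)$ with $L\le c_1$, $2\le W\le c_2N$, $S\le c_2N$, $1\le B\le c_2N$ for constants $c_1,c_2$ and $N$ sufficiently large, and let $\Delta\Phi(L,W,S,B)=\{\Delta F:F\in\Phi(L,W,S,B)\}$. Then there is a constant $C$ depending only on $d,c_1$ such that for all $\delta\in(0,1)$ $$\log\mathcal N\big(\delta,\Delta\Phi(L,W,S,B),\|\cdot\|_\infty\big)\le C\,S\big[\log(\delta^{-1})+3^L\log(WB)\big],$$ where $\|g\|_\infty=\sup_{x\in\Omega}|g(x)|$.
   Context: $\Omega=[0,1]^d$. For integers $L,W,S\ge1$ and $B>0$, $\Phi(L,W,S,B)$ is the set of functions $F:\mathbb R^d\to\mathbb R$ of the form $F=(\mathcal W^{(L)}\eta_3(\cdot)+b^{(L)})\circ\cdots\circ(\mathcal W^{(2)}\eta_3(\cdot)+b^{(2)})\circ(\mathcal W^{(1)}x+b^{(1)})$, where $\eta_3(t)=\max\{t,0\}^3$ acts componentwise, $\mathcal W^{(1)}\in\mathbb R^{W\times d}$, $b^{(1)}\in\mathbb R^W$, $\mathcal W^{(l)}\in\mathbb R^{W\times W}$, $b^{(l)}\in\mathbb R^W$ for $1<l<L$, $\mathcal W^{(L)}\in\mathbb R^{1\times W}$, $b^{(L)}\in\mathbb R$, the total number of nonzero entries of all $\mathcal W^{(l)},b^{(l)}$ is at most $S$, and all entries have absolute value at most $B$. $\Delta F=\sum_{j=1}^d\partial^2F/\partial x_j^2$ (well defined since $\eta_3\in C^2$). $\mathcal N(\delta,A,\|\cdot\|)$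 is the minimal number of $\|\cdot\|$-balls of radius $\delta$ centered in $A$ needed to cover $A$. *)

theory Defs
  imports "HOL-Analysis.Analysis"
begin

text \<open>Inputs x in R^d are represented as functions nat => real; only the
coordinates x 0, ..., x (d-1) are used.\<close>

definition eta3 :: "real \<Rightarrow> real" where
  "eta3 t = (max t 0) ^ 3"

definition Omega :: "nat \<Rightarrow> (nat \<Rightarrow> real) set" where
  "Omega d = {x. \<forall>j<d. 0 \<le> x j \<and> x j \<le> 1}"

definition nrows :: "nat \<Rightarrow> nat \<Rightarrow> nat \<Rightarrow> nat" where
  "nrows L W l = (if l = L then 1 else W)"

definition ncols :: "nat \<Rightarrow> nat \<Rightarrow> nat \<Rightarrow> nat" where
  "ncols d W l = (if l = 1 then d else W)"

text \<open>Wt l i j is the (i,j) entry of the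
weight matrix of layer l, bs l i the i-th bias entry of layer l.\<close>
primrec hval :: "nat \<Rightarrow> nat \<Rightarrow> (nat \<Rightarrow> nat \<Rightarrow> nat \<Rightarrow> real) \<Rightarrow> (nat \<Rightarrow> nat \<Rightarrow> real)
    \<Rightarrow> (nat \<Rightarrow> real) \<Rightarrow> nat \<Rightarrow> nat \<Rightarrow> real" where
  "hval d W Wt bs x 0 = x"
| "hval d W Wt bs x (Suc l) = (\<lambda>i.
     (\<Sum>j < ncols d W (Suc l).
        Wt (Suc l) i j * (if l = 0 then hval d W Wt bs x l j else eta3 (hval d W Wt bs x l j)))
     + bs (Suc l) i)"

definition weight_idx :: "nat \<Rightarrow> nat \<Rightarrow> nat \<Rightarrow> (nat \<times> nat \<times> nat) set" where
  "weight_idx d L W = {(l, i, j). 1 \<le> l \<and> l \<le> L \<and> i < nrows L W l \<and> j < ncols d W l}"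

definition bias_idx :: "nat \<Rightarrow> nat \<Rightarrow> (nat \<times> nat) set" where
  "bias_idx L W = {(l, i). 1 \<le> l \<and> l \<le> L \<and> i < nrows L W l}"

definition Phi :: "nat \<Rightarrow> nat \<Rightarrow> nat \<Rightarrow> nat \<Rightarrow> real \<Rightarrow> ((nat \<Rightarrow> real) \<Rightarrow> real) set" where
  "Phi d L W S B = {F. \<exists>Wt bs.
      F = (\<lambda>x. hval d W Wt bs x L 0)
    \<and> card {(l, i, j) \<in> weight_idx d L W. Wt l i j \<noteq> 0}
        + card {(l, i) \<in> bias_idx L W. bs l i \<noteq> 0} \<le> S
    \<and> (\<forall>(l, i, j) \<in> weight_idx d L W. \<bar>Wt l i j\<bar> \<le> B)
    \<and> (\<forall>(l, i) \<in> bias_idx L W. \<bar>bs l i\<bar> \<le> B)}"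

definition laplacian :: "nat \<Rightarrow> ((nat \<Rightarrow> real) \<Rightarrow> real) \<Rightarrow> (nat \<Rightarrow> real) \<Rightarrow> real" where
  "laplacian d F x = (\<Sum>j<d. deriv (deriv (\<lambda>t. F (x(j := t)))) (x j))"

definition sup_norm_Omega :: "nat \<Rightarrow> ((nat \<Rightarrow> real) \<Rightarrow> real) \<Rightarrow> real" where
  "sup_norm_Omega d g = (SUP x\<in>Omega d. \<bar>g x\<bar>)"

text \<open>Covering number: minimal number of closed sup-norm balls of radius delta,
centred in A, covering A (infinity if no finite cover exists).\<close>
definition covering_number :: "nat \<Rightarrow> real \<Rightarrow> ((nat \<Rightarrow> real) \<Rightarrow> real) set \<Rightarrow> enat" where
  "covering_number d \<delta> A = (INF C \<in> {C. finite C \<and> C \<subseteq> A \<and>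
      (\<forall>g\<in>A. \<exists>c\<in>C. sup_norm_Omega d (\<lambda>x. g x - c x) \<le> \<delta>)}. enat (card C))"

end

theory Submission
  imports Defs
begin


lemma deriv_maxpow:
  fixes n :: nat and t :: real
  shows "((\<lambda>s. max s 0 ^ Suc (Suc n)) has_real_derivative (real (Suc (Suc n)) * max t 0 ^ Suc n)) (at t)"
proof (cases "t = 0")
  case True
  have "((\<lambda>h::real. (max (0+h) 0 ^ Suc (Suc n) - max 0 0 ^ Suc (Suc n)) / h) \<longlongrightarrow> 0) (at 0)"
  proof (rule Lim_null_comparison[where g="\<lambda>h. \<bar>h\<bar>^Suc n"])
    show "\<forall>\<^sub>F h in at 0. norm ((max (0+h) 0 ^ Suc (Suc n) - max 0 0 ^ Suc (Suc n)) / h) \<le> \<bar>h\<bar>^Suc n"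
    proof (rule always_eventually, intro allI)
      fix h :: real
      show "norm ((max (0+h) 0 ^ Suc (Suc n) - max 0 0 ^ Suc (Suc n)) / h) \<le> \<bar>h\<bar>^Suc n"
      proof (cases "h > 0")
        case True then show ?thesis by (simp add: abs_mult power_abs)
      next
        case False then have "max (0+h) 0 = 0" by simp
        then have "norm ((max (0+h) 0 ^ Suc (Suc n) - max 0 0 ^ Suc (Suc n)) / h) = 0" by simp
        moreover have "0 \<le> \<bar>h\<bar>^Suc n" by (rule zero_le_power_abs)
        ultimately show ?thesis by linarith
      qed
    qed
    show "((\<lambda>h::real. \<bar>h\<bar>^Suc n) \<longlongrightarrow> 0) (at 0)"
      by (rule tendsto_eq_intros refl | simp)+
  qed
  then show ?thesis using True by (simp add: DERIV_def)
next
  case False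
  show ?thesis
  proof (cases "t > 0")
    case True
    have ev: "eventually (\<lambda>s. s \<in> {0<..}) (nhds t)" using True
      by (intro eventually_nhds_in_open) auto
    have "((\<lambda>s. s ^ Suc (Suc n)) has_real_derivative (real (Suc (Suc n)) * t ^ Suc n)) (at t)"
      by (rule derivative_eq_intros refl | simp)+
    then show ?thesis
      by (rule DERIV_cong_ev[THEN iffD1, rotated -1]) (use ev True in \<open>auto elim!: eventually_mono simp: max_def\<close>)
  next
    case f2: False
    with False have tn: "t < 0" by auto
    have ev: "eventually (\<lambda>s. s \<in> {..<0}) (nhds t)" using tn
      by (intro eventually_nhds_in_open) auto
    have "((\<lambda>s. 0::real) has_real_derivative 0) (at t)" by simp
    then show ?thesis
      by (rule DERIV_cong_ev[THEN iffD1, rotated -1]) (use ev tn in \<open>auto elim!: eventually_mono simp: max_def\<close>)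
  qed
qed

definition eta3d :: "real \<Rightarrow> real" where "eta3d t = 3 * (max t 0)^2"
definition eta3dd :: "real \<Rightarrow> real" where "eta3dd t = 6 * max t 0"

lemma DERIV_eta3: "(eta3 has_real_derivative eta3d t) (at t)"
proof -
  have "((\<lambda>s. max s 0 ^ Suc (Suc 1)) has_real_derivative (real (Suc (Suc 1)) * max t 0 ^ Suc 1)) (at t)"
    by (rule deriv_maxpow)
  then show ?thesis unfolding eta3_def eta3d_def by (simp add: numeral_eq_Suc eval_nat_numeral)
qed

lemma DERIV_eta3d: "(eta3d has_real_derivative eta3dd t) (at t)"
proof -
  have "((\<lambda>s. max s 0 ^ Suc (Suc 0)) has_real_derivative (real (Suc (Suc 0)) * max t 0 ^ Suc 0)) (at t)"
    by (rule deriv_maxpow)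
  then have "((\<lambda>s. 3 * max s 0 ^ Suc (Suc 0)) has_real_derivative 3 * (real (Suc (Suc 0)) * max t 0 ^ Suc 0)) (at t)"
    by (rule DERIV_cmult)
  then show ?thesis unfolding eta3d_def eta3dd_def by (simp add: eval_nat_numeral)
qed

primrec hdv :: "nat \<Rightarrow> nat \<Rightarrow> (nat \<Rightarrow> nat \<Rightarrow> nat \<Rightarrow> real) \<Rightarrow> (nat \<Rightarrow> nat \<Rightarrow> real)
    \<Rightarrow> (nat \<Rightarrow> real) \<Rightarrow> nat \<Rightarrow> nat \<Rightarrow> nat \<Rightarrow> real" where
  "hdv d W Wt bs x j 0 = (\<lambda>k. if k = j then 1 else 0)"
| "hdv d W Wt bs x j (Suc l) = (\<lambda>i.
     (\<Sum>k < ncols d W (Suc l).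
        Wt (Suc l) i k * (if l = 0 then hdv d W Wt bs x j l k
           else eta3d (hval d W Wt bs x l k) * hdv d W Wt bs x j l k)))"

primrec hdd :: "nat \<Rightarrow> nat \<Rightarrow> (nat \<Rightarrow> nat \<Rightarrow> nat \<Rightarrow> real) \<Rightarrow> (nat \<Rightarrow> nat \<Rightarrow> real)
    \<Rightarrow> (nat \<Rightarrow> real) \<Rightarrow> nat \<Rightarrow> nat \<Rightarrow> nat \<Rightarrow> real" where
  "hdd d W Wt bs x j 0 = (\<lambda>k. 0)"
| "hdd d W Wt bs x j (Suc l) = (\<lambda>i.
     (\<Sum>k < ncols d W (Suc l).
        Wt (Suc l) i k * (if l = 0 then hdd d W Wt bs x j l k
           else eta3dd (hval d W Wt bs x l k) * (hdv d W Wt bs x j l k)^2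
              + eta3d (hval d W Wt bs x l k) * hdd d W Wt bs x j l k)))"

lemma hval_derivs:
  "\<forall>i. ((\<lambda>t. hval d W Wt bs (x(j:=t)) l i) has_real_derivative hdv d W Wt bs (x(j:=t)) j l i) (at t)
     \<and> ((\<lambda>t. hdv d W Wt bs (x(j:=t)) j l i) has_real_derivative hdd d W Wt bs (x(j:=t)) j l i) (at t)"
proof (induction l)
  case 0
  show ?case
  proof
    fix i
    show "((\<lambda>t. hval d W Wt bs (x(j:=t)) 0 i) has_real_derivative hdv d W Wt bs (x(j:=t)) j 0 i) (at t)
     \<and> ((\<lambda>t. hdv d W Wt bs (x(j:=t)) j 0 i) has_real_derivative hdd d W Wt bs (x(j:=t)) j 0 i) (at t)"
      by (cases "i = j") auto
  qed
next
  case (Suc l)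
  note IH = Suc.IH
  let ?v = "\<lambda>t k. hval d W Wt bs (x(j:=t)) l k"
  let ?d = "\<lambda>t k. hdv d W Wt bs (x(j:=t)) j l k"
  let ?dd = "\<lambda>t k. hdd d W Wt bs (x(j:=t)) j l k"
  show ?case
  proof
    fix i
    show "((\<lambda>t. hval d W Wt bs (x(j:=t)) (Suc l) i) has_real_derivative hdv d W Wt bs (x(j:=t)) j (Suc l) i) (at t)
     \<and> ((\<lambda>t. hdv d W Wt bs (x(j:=t)) j (Suc l) i) has_real_derivative hdd d W Wt bs (x(j:=t)) j (Suc l) i) (at t)"
    proof (cases "l = 0")
      case True
      have D1: "\<And>k. ((\<lambda>t. Wt (Suc l) i k * ?v t k) has_real_derivative Wt (Suc l) i k * ?d t k) (at t)"
        by (intro DERIV_cmult) (use IH in blast)+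
      have D2: "\<And>k. ((\<lambda>t. Wt (Suc l) i k * ?d t k) has_real_derivative Wt (Suc l) i k * ?dd t k) (at t)"
        by (intro DERIV_cmult) (use IH in blast)+
      have A: "((\<lambda>t. (\<Sum>k < ncols d W (Suc l). Wt (Suc l) i k * ?v t k) + bs (Suc l) i) has_real_derivative
          (\<Sum>k < ncols d W (Suc l). Wt (Suc l) i k * ?d t k) + 0) (at t)"
        by (intro DERIV_add DERIV_sum D1 DERIV_const)
      have B: "((\<lambda>t. (\<Sum>k < ncols d W (Suc l). Wt (Suc l) i k * ?d t k)) has_real_derivative
          (\<Sum>k < ncols d W (Suc l). Wt (Suc l) i k * ?dd t k)) (at t)"
        by (intro DERIV_sum D2)
      show ?thesis using A B True by simp
    next
      case False
      have D1: "\<And>k. ((\<lambda>t. Wt (Suc l) i k * eta3 (?v t k)) has_real_derivative Wt (Suc l) i k * (eta3d (?v t k) * ?d t k)) (at t)"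
        by (intro DERIV_cmult DERIV_chain2[OF DERIV_eta3]) (use IH in blast)+
      have A: "((\<lambda>t. (\<Sum>k < ncols d W (Suc l). Wt (Suc l) i k * eta3 (?v t k)) + bs (Suc l) i) has_real_derivative
          (\<Sum>k < ncols d W (Suc l). Wt (Suc l) i k * (eta3d (?v t k) * ?d t k)) + 0) (at t)"
        by (intro DERIV_add DERIV_sum D1 DERIV_const)
      have B: "((\<lambda>t. (\<Sum>k < ncols d W (Suc l). Wt (Suc l) i k * (eta3d (?v t k) * ?d t k))) has_real_derivative
          (\<Sum>k < ncols d W (Suc l). Wt (Suc l) i k * (eta3dd (?v t k) * (?d t k)^2 + eta3d (?v t k) * ?dd t k))) (at t)"
      proof (intro DERIV_sum DERIV_cmult)
        fix k
        have X: "((\<lambda>t. eta3d (?v t k)) has_real_derivative eta3dd (?v t k) * ?d t k) (at t)"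
          by (rule DERIV_chain2[OF DERIV_eta3d]) (use IH in blast)
        have Y: "((\<lambda>t. ?d t k) has_real_derivative ?dd t k) (at t)" using IH by blast
        from DERIV_mult[OF X Y]
        show "((\<lambda>t. eta3d (?v t k) * ?d t k) has_real_derivative
           eta3dd (?v t k) * (?d t k)^2 + eta3d (?v t k) * ?dd t k) (at t)"
          by (simp add: power2_eq_square algebra_simps)
      qed
      show ?thesis using A B False by simp
    qed
  qed
qed

lemma laplacian_eq:
  "laplacian d (\<lambda>x. hval d W Wt bs x L 0) x = (\<Sum>j<d. hdd d W Wt bs x j L 0)"
proof -
  have "deriv (deriv (\<lambda>t. hval d W Wt bs (x(j := t)) L 0)) (x j) = hdd d W Wt bs x j L 0" for j
  proof -
    have e: "deriv (\<lambda>t. hval d W Wt bs (x(j := t)) L 0) = (\<lambda>t. hdv d W Wt bs (x(j := t)) j L 0)"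
      using hval_derivs[of d W Wt bs x j L] by (intro ext DERIV_imp_deriv) blast
    have "deriv (\<lambda>t. hdv d W Wt bs (x(j := t)) j L 0) (x j) = hdd d W Wt bs (x(j := x j)) j L 0"
      using hval_derivs[of d W Wt bs x j L "x j"] by (intro DERIV_imp_deriv) blast
    then show ?thesis using e by simp
  qed
  then show ?thesis unfolding laplacian_def by simp
qed

lemma sum_abs_bound:
  fixes f :: "nat \<Rightarrow> real"
  assumes "\<And>k. k < n \<Longrightarrow> \<bar>f k\<bar> \<le> c"
  shows "\<bar>\<Sum>k<n. f k\<bar> \<le> real n * c"
proof -
  have "\<bar>\<Sum>k<n. f k\<bar> \<le> (\<Sum>k<n. \<bar>f k\<bar>)" by (rule sum_abs)
  also have "\<dots> \<le> real (card {..<n}) * c" using assms by (intro sum_bounded_above) auto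
  finally show ?thesis by simp
qed

lemma prod_diff:
  fixes p q p' q' :: real
  assumes "\<bar>p\<bar> \<le> P0" "\<bar>q'\<bar> \<le> Q0" "\<bar>p - p'\<bar> \<le> e1" "\<bar>q - q'\<bar> \<le> e2"
  shows "\<bar>p * q - p' * q'\<bar> \<le> P0 * e2 + Q0 * e1"
proof -
  have "p * q - p' * q' = p * (q - q') + q' * (p - p')" by (simp add: algebra_simps)
  then have "\<bar>p * q - p' * q'\<bar> \<le> \<bar>p\<bar> * \<bar>q - q'\<bar> + \<bar>q'\<bar> * \<bar>p - p'\<bar>"
    by (simp add: abs_mult[symmetric] abs_triangle_ineq)
  also have "\<dots> \<le> P0 * e2 + Q0 * e1"
    using assms by (intro add_mono mult_mono) auto
  finally show ?thesis .
qed

lemma prod_bound: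
  fixes p q :: real
  assumes "\<bar>p\<bar> \<le> P0" "\<bar>q\<bar> \<le> Q0"
  shows "\<bar>p * q\<bar> \<le> P0 * Q0"
  using assms by (simp add: abs_mult mult_mono)

lemma max0_facts:
  fixes h g R :: real
  assumes "\<bar>h\<bar> \<le> R" "\<bar>g\<bar> \<le> R"
  shows "\<bar>eta3 h\<bar> \<le> R^3" "\<bar>eta3d h\<bar> \<le> 3*R^2" "\<bar>eta3dd h\<bar> \<le> 6*R"
    "\<bar>eta3 h - eta3 g\<bar> \<le> 3*R^2*\<bar>h - g\<bar>"
    "\<bar>eta3d h - eta3d g\<bar> \<le> 6*R*\<bar>h - g\<bar>"
    "\<bar>eta3dd h - eta3dd g\<bar> \<le> 6*\<bar>h - g\<bar>"
proof -
  define u where "u = max h 0"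
  define v where "v = max g 0"
  have u: "0 \<le> u" "u \<le> R" using assms unfolding u_def by auto
  have v: "0 \<le> v" "v \<le> R" using assms unfolding v_def by auto
  have uv: "\<bar>u - v\<bar> \<le> \<bar>h - g\<bar>" unfolding u_def v_def by auto
  show "\<bar>eta3 h\<bar> \<le> R^3" unfolding eta3_def u_def[symmetric] using u by (simp add: power_mono)
  show "\<bar>eta3d h\<bar> \<le> 3*R^2" unfolding eta3d_def u_def[symmetric] using u by (simp add: power_mono)
  show "\<bar>eta3dd h\<bar> \<le> 6*R" unfolding eta3dd_def u_def[symmetric] using u by simp
  have "\<bar>u^3 - v^3\<bar> = (\<bar>u - v\<bar>) * (u * u + u * v + v * v)"
  proof -
    have "u^3 - v^3 = (u - v) * (u * u + u * v + v * v)" by (simp add: algebra_simps power2_eq_square power3_eq_cube)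
    moreover have "u * u + u * v + v * v \<ge> 0" using u v by simp
    ultimately show ?thesis by (simp add: abs_mult)
  qed
  also have "\<dots> \<le> \<bar>h - g\<bar> * (3*R^2)"
  proof (rule mult_mono)
    have "u * u \<le> R*R" "v * v \<le> R*R" using u v by (auto intro: mult_mono)
    moreover have "u * v \<le> R*R" using u v by (intro mult_mono) auto
    ultimately show "u * u + u * v + v * v \<le> 3*R^2" by (simp add: power2_eq_square)
  qed (use uv u v in auto)
  finally show "\<bar>eta3 h - eta3 g\<bar> \<le> 3*R^2*\<bar>h - g\<bar>"
    unfolding eta3_def u_def[symmetric] v_def[symmetric] by (simp add: mult.commute)
  have "\<bar>3 * u^2 - 3 * v^2\<bar> = 3 * (\<bar>u - v\<bar>) * (u + v)"
  proof -
    have "3 * u^2 - 3 * v^2 = 3 * (u - v) * (u + v)" by (simp add: algebra_simps power2_eq_square)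
    moreover have "\<bar>3 * (u - v) * (u + v)\<bar> = 3 * (\<bar>u - v\<bar>) * (u + v)"
      unfolding abs_mult using u v by simp
    ultimately show ?thesis by simp
  qed
  also have "\<dots> \<le> 3 * (\<bar>h - g\<bar>) * (2*R)"
    by (rule mult_mono) (use uv u v in auto)
  also have "\<dots> = 6*R*\<bar>h - g\<bar>" by (simp add: algebra_simps)
  finally show "\<bar>eta3d h - eta3d g\<bar> \<le> 6*R*\<bar>h - g\<bar>"
    unfolding eta3d_def u_def[symmetric] v_def[symmetric] .
  show "\<bar>eta3dd h - eta3dd g\<bar> \<le> 6*\<bar>h - g\<bar>"
    unfolding eta3dd_def u_def[symmetric] v_def[symmetric]
    using uv by (smt (verit))
qed

lemma act_bound:
  fixes h h1 h2 R :: real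
  assumes "\<bar>h\<bar> \<le> R" "\<bar>h1\<bar> \<le> R" "\<bar>h2\<bar> \<le> R" "1 \<le> R"
  shows "\<bar>eta3 h\<bar> \<le> 9*R^3" "\<bar>eta3d h * h1\<bar> \<le> 9*R^3"
    "\<bar>eta3dd h * h1^2 + eta3d h * h2\<bar> \<le> 9*R^3"
proof -
  note f = max0_facts[OF assms(1) assms(1)]
  have R3: "0 \<le> R^3" using assms by simp
  show "\<bar>eta3 h\<bar> \<le> 9*R^3" using f(1) R3 by linarith
  have "\<bar>eta3d h * h1\<bar> \<le> (3*R^2) * R" by (rule prod_bound[OF f(2) assms(2)])
  also have "\<dots> = 3 * R^3" by (simp add: power2_eq_square power3_eq_cube)
  finally show "\<bar>eta3d h * h1\<bar> \<le> 9*R^3" using R3 by linarith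
  have a: "\<bar>h1^2\<bar> \<le> R * R" unfolding power2_eq_square by (rule prod_bound[OF assms(2) assms(2)])
  have "\<bar>eta3dd h * h1^2\<bar> \<le> (6*R) * (R*R)" by (rule prod_bound[OF f(3) a])
  moreover have "\<bar>eta3d h * h2\<bar> \<le> (3*R^2) * R" by (rule prod_bound[OF f(2) assms(3)])
  ultimately have "\<bar>eta3dd h * h1^2 + eta3d h * h2\<bar> \<le> (6*R) * (R*R) + (3*R^2) * R" by linarith
  also have "\<dots> = 9 * R^3" by (simp add: power2_eq_square power3_eq_cube)
  finally show "\<bar>eta3dd h * h1^2 + eta3d h * h2\<bar> \<le> 9*R^3" .
qed

lemma act_diff:
  fixes h h1 h2 g g1 g2 R E :: real
  assumes "\<bar>h\<bar> \<le> R" "\<bar>h1\<bar> \<le> R" "\<bar>h2\<bar> \<le> R" "1 \<le> R"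
    "\<bar>g\<bar> \<le> R" "\<bar>g1\<bar> \<le> R" "\<bar>g2\<bar> \<le> R"
    "\<bar>h - g\<bar> \<le> E" "\<bar>h1 - g1\<bar> \<le> E" "\<bar>h2 - g2\<bar> \<le> E"
  shows "\<bar>eta3 h - eta3 g\<bar> \<le> 27*R^2*E" "\<bar>eta3d h * h1 - eta3d g * g1\<bar> \<le> 27*R^2*E"
    "\<bar>(eta3dd h * h1^2 + eta3d h * h2) - (eta3dd g * g1^2 + eta3d g * g2)\<bar> \<le> 27*R^2*E"
proof -
  note f = max0_facts[OF assms(1) assms(5)]
  note fg = max0_facts[OF assms(5) assms(1)]
  have E0: "0 \<le> E" using assms(8) by linarith
  have R2: "0 \<le> R^2" by simp
  have RE: "0 \<le> R^2 * E" using E0 by simp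
  have d0: "\<bar>eta3 h - eta3 g\<bar> \<le> 3*R^2*E"
    using f(4) assms(8) by (meson mult_left_mono order_trans R2 mult_nonneg_nonneg zero_le_numeral)
  then show "\<bar>eta3 h - eta3 g\<bar> \<le> 27*R^2*E" using RE by linarith
  have d1: "\<bar>eta3d h - eta3d g\<bar> \<le> 6*R*E"
    using f(5) assms(8) assms(4) by (meson mult_left_mono order_trans mult_nonneg_nonneg zero_le_numeral le_numeral_extra(1) order.trans[of 0 1 R] zero_le_one)
  have d2: "\<bar>eta3dd h - eta3dd g\<bar> \<le> 6*E"
    using f(6) assms(8) by (smt (verit))
  have "\<bar>eta3d h * h1 - eta3d g * g1\<bar> \<le> (3*R^2) * E + R * (6*R*E)"
    by (rule prod_diff[OF f(2) assms(6) d1 assms(9)])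
  also have "\<dots> = 9 * (R^2 * E)" by (simp add: power2_eq_square algebra_simps)
  finally have p1: "\<bar>eta3d h * h1 - eta3d g * g1\<bar> \<le> 9 * (R^2 * E)" .
  then show "\<bar>eta3d h * h1 - eta3d g * g1\<bar> \<le> 27*R^2*E" using RE by linarith
  have sq: "\<bar>h1^2 - g1^2\<bar> \<le> R * E + R * E" unfolding power2_eq_square
    by (rule prod_diff[OF assms(2) assms(6) assms(9) assms(9)])
  have g1sq: "\<bar>g1^2\<bar> \<le> R * R" unfolding power2_eq_square by (rule prod_bound[OF assms(6) assms(6)])
  have "\<bar>eta3dd h * h1^2 - eta3dd g * g1^2\<bar> \<le> (6*R) * (R * E + R * E) + (R * R) * (6*E)"
    by (rule prod_diff[OF f(3) g1sq d2 sq])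
  also have "\<dots> = 18 * (R^2 * E)" by (simp add: power2_eq_square algebra_simps)
  finally have p2: "\<bar>eta3dd h * h1^2 - eta3dd g * g1^2\<bar> \<le> 18 * (R^2 * E)" .
  have "\<bar>eta3d h * h2 - eta3d g * g2\<bar> \<le> (3*R^2) * E + R * (6*R*E)"
    by (rule prod_diff[OF f(2) assms(7) d1 assms(10)])
  also have "\<dots> = 9 * (R^2 * E)" by (simp add: power2_eq_square algebra_simps)
  finally have p3: "\<bar>eta3d h * h2 - eta3d g * g2\<bar> \<le> 9 * (R^2 * E)" .
  have "(eta3dd h * h1^2 + eta3d h * h2) - (eta3dd g * g1^2 + eta3d g * g2)
     = (eta3dd h * h1^2 - eta3dd g * g1^2) + (eta3d h * h2 - eta3d g * g2)" by simp
  then have "\<bar>(eta3dd h * h1^2 + eta3d h * h2) - (eta3dd g * g1^2 + eta3d g * g2)\<bar>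
     \<le> \<bar>eta3dd h * h1^2 - eta3dd g * g1^2\<bar> + \<bar>eta3d h * h2 - eta3d g * g2\<bar>"
    by (simp only: abs_triangle_ineq)
  then show "\<bar>(eta3dd h * h1^2 + eta3d h * h2) - (eta3dd g * g1^2 + eta3d g * g2)\<bar> \<le> 27*R^2*E"
    using p2 p3 by linarith
qed

lemma lin_bound:
  fixes w a :: "nat \<Rightarrow> real"
  assumes "\<And>k. k < n \<Longrightarrow> \<bar>w k\<bar> \<le> B" "\<And>k. k < n \<Longrightarrow> \<bar>a k\<bar> \<le> A" "\<bar>b\<bar> \<le> B"
  shows "\<bar>(\<Sum>k<n. w k * a k) + b\<bar> \<le> real n * (B * A) + B"
proof -
  have "\<bar>\<Sum>k<n. w k * a k\<bar> \<le> real n * (B * A)"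
    by (rule sum_abs_bound) (use assms in \<open>auto intro: prod_bound\<close>)
  then show ?thesis using assms(3) by linarith
qed

lemma lin_diff:
  fixes w a w' a' :: "nat \<Rightarrow> real"
  assumes "\<And>k. k < n \<Longrightarrow> \<bar>w k\<bar> \<le> B" "\<And>k. k < n \<Longrightarrow> \<bar>a' k\<bar> \<le> A"
    "\<And>k. k < n \<Longrightarrow> \<bar>a k - a' k\<bar> \<le> D" "\<And>k. k < n \<Longrightarrow> \<bar>w k - w' k\<bar> \<le> e"
    "\<bar>b - b'\<bar> \<le> e"
  shows "\<bar>((\<Sum>k<n. w k * a k) + b) - ((\<Sum>k<n. w' k * a' k) + b')\<bar> \<le> real n * (B * D + A * e) + e"
proof -
  have "\<bar>\<Sum>k<n. w k * a k - w' k * a' k\<bar> \<le> real n * (B * D + A * e)"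
    by (rule sum_abs_bound) (use assms in \<open>auto intro: prod_diff\<close>)
  moreover have "((\<Sum>k<n. w k * a k) + b) - ((\<Sum>k<n. w' k * a' k) + b')
     = (\<Sum>k<n. w k * a k - w' k * a' k) + (b - b')" by (simp add: sum_subtractf)
  ultimately show ?thesis using assms(5) by (smt (verit))
qed

primrec Tseq :: "real \<Rightarrow> nat \<Rightarrow> real" where
  "Tseq Z 0 = 1"
| "Tseq Z (Suc l) = Z^4 * (Tseq Z l)^3"

lemma Tseq_ge1: "1 \<le> Z \<Longrightarrow> 1 \<le> Tseq Z l"
proof (induction l)
  case (Suc l)
  have "1 \<le> Z^4" "1 \<le> (Tseq Z l)^3" using Suc by (simp_all add: one_le_power)
  then show ?case using mult_mono[of 1 "Z^4" 1 "(Tseq Z l)^3"] by simp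
qed simp

lemma Tseq_closed: "1 \<le> Z \<Longrightarrow> Tseq Z l * Z^2 \<le> Z^(2*3^l)"
proof (induction l)
  case 0 then show ?case by simp
next
  case (Suc l)
  have "0 \<le> Tseq Z l" using Tseq_ge1[OF Suc.prems, of l] by simp
  then have T0: "0 \<le> Tseq Z l * Z^2" by simp
  have "Tseq Z (Suc l) * Z^2 * Z^6 = (Tseq Z l * Z^2)^3 * Z^6"
    by (simp add: power_mult_distrib algebra_simps power_add[symmetric] flip: power_mult)
  also have "\<dots> \<le> (Z^(2*3^l))^3 * Z^6"
    using Suc T0 by (intro mult_right_mono power_mono) auto
  also have "\<dots> = Z^(2*3^(Suc l)) * Z^6" by (simp flip: power_mult)
  finally show ?case using Suc.prems by simp
qed

definition av where "av d W Wt bs x l k = (if l = 0 then hval d W Wt bs x l k else eta3 (hval d W Wt bs x l k))"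
definition ad where "ad d W Wt bs x j l k = (if l = 0 then hdv d W Wt bs x j l k
   else eta3d (hval d W Wt bs x l k) * hdv d W Wt bs x j l k)"
definition add2 where "add2 d W Wt bs x j l k = (if l = 0 then hdd d W Wt bs x j l k
   else eta3dd (hval d W Wt bs x l k) * (hdv d W Wt bs x j l k)^2 + eta3d (hval d W Wt bs x l k) * hdd d W Wt bs x j l k)"

lemma hval_Suc': "hval d W Wt bs x (Suc l) i = (\<Sum>k<ncols d W (Suc l). Wt (Suc l) i k * av d W Wt bs x l k) + bs (Suc l) i"
  by (simp add: av_def)
lemma hdv_Suc': "hdv d W Wt bs x j (Suc l) i = (\<Sum>k<ncols d W (Suc l). Wt (Suc l) i k * ad d W Wt bs x j l k) + 0"
  by (simp add: ad_def)
lemma hdd_Suc': "hdd d W Wt bs x j (Suc l) i = (\<Sum>k<ncols d W (Suc l). Wt (Suc l) i k * add2 d W Wt bs x j l k) + 0"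
  by (simp add: add2_def)

context
  fixes d L W :: nat and B e :: real and Wt Wt' :: "nat\<Rightarrow>nat\<Rightarrow>nat\<Rightarrow>real"
    and bs bs' :: "nat\<Rightarrow>nat\<Rightarrow>real" and x :: "nat\<Rightarrow>real" and j :: nat
begin

definition actok where "actok l k A D \<longleftrightarrow>
   \<bar>av d W Wt bs x l k\<bar> \<le> A \<and> \<bar>av d W Wt' bs' x l k\<bar> \<le> A \<and> \<bar>av d W Wt bs x l k - av d W Wt' bs' x l k\<bar> \<le> D \<and>
   \<bar>ad d W Wt bs x j l k\<bar> \<le> A \<and> \<bar>ad d W Wt' bs' x j l k\<bar> \<le> A \<and> \<bar>ad d W Wt bs x j l k - ad d W Wt' bs' x j l k\<bar> \<le> D \<and>
   \<bar>add2 d W Wt bs x j l k\<bar> \<le> A \<and> \<bar>add2 d W Wt' bs' x j l k\<bar> \<le> A \<and> \<bar>add2 d W Wt bs x j l k - add2 d W Wt' bs' x j l k\<bar> \<le> D"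

definition preok where "preok l k A D \<longleftrightarrow>
   \<bar>hval d W Wt bs x l k\<bar> \<le> A \<and> \<bar>hval d W Wt' bs' x l k\<bar> \<le> A \<and> \<bar>hval d W Wt bs x l k - hval d W Wt' bs' x l k\<bar> \<le> D \<and>
   \<bar>hdv d W Wt bs x j l k\<bar> \<le> A \<and> \<bar>hdv d W Wt' bs' x j l k\<bar> \<le> A \<and> \<bar>hdv d W Wt bs x j l k - hdv d W Wt' bs' x j l k\<bar> \<le> D \<and>
   \<bar>hdd d W Wt bs x j l k\<bar> \<le> A \<and> \<bar>hdd d W Wt' bs' x j l k\<bar> \<le> A \<and> \<bar>hdd d W Wt bs x j l k - hdd d W Wt' bs' x j l k\<bar> \<le> D"

lemma actok_mono: "actok l k A D \<Longrightarrow> A \<le> A' \<Longrightarrow> D \<le> D' \<Longrightarrow> actok l k A' D'"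
  unfolding actok_def by (elim conjE, intro conjI; linarith)

lemma act_step:
  assumes "0 < l" "preok l k R E" "1 \<le> R"
  shows "actok l k (9*R^3) (27*R^2*E)"
proof -
  from assms(2)[unfolded preok_def] have p:
    "\<bar>hval d W Wt bs x l k\<bar> \<le> R" "\<bar>hval d W Wt' bs' x l k\<bar> \<le> R" "\<bar>hval d W Wt bs x l k - hval d W Wt' bs' x l k\<bar> \<le> E"
    "\<bar>hdv d W Wt bs x j l k\<bar> \<le> R" "\<bar>hdv d W Wt' bs' x j l k\<bar> \<le> R" "\<bar>hdv d W Wt bs x j l k - hdv d W Wt' bs' x j l k\<bar> \<le> E"
    "\<bar>hdd d W Wt bs x j l k\<bar> \<le> R" "\<bar>hdd d W Wt' bs' x j l k\<bar> \<le> R" "\<bar>hdd d W Wt bs x j l k - hdd d W Wt' bs' x j l k\<bar> \<le> E"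
    by blast+
  note b1 = act_bound[OF p(1) p(4) p(7) assms(3)]
  note b2 = act_bound[OF p(2) p(5) p(8) assms(3)]
  note df = act_diff[OF p(1) p(4) p(7) assms(3) p(2) p(5) p(8) p(3) p(6) p(9)]
  have l0: "l \<noteq> 0" using assms(1) by simp
  show ?thesis unfolding actok_def av_def ad_def add2_def if_not_P[OF l0]
    using b1 b2 df by blast
qed

context
  assumes d1: "1 \<le> d" and W1: "1 \<le> W" and B1: "1 \<le> B" and e0: "0 \<le> e"
    and xO: "x \<in> Omega d"
    and wB: "\<forall>(l,i,k)\<in>weight_idx d L W. \<bar>Wt l i k\<bar> \<le> B"
    and wB': "\<forall>(l,i,k)\<in>weight_idx d L W. \<bar>Wt' l i k\<bar> \<le> B"
    and bB: "\<forall>(l,i)\<in>bias_idx L W. \<bar>bs l i\<bar> \<le> B"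
    and bB': "\<forall>(l,i)\<in>bias_idx L W. \<bar>bs' l i\<bar> \<le> B"
    and we: "\<forall>(l,i,k)\<in>weight_idx d L W. \<bar>Wt l i k - Wt' l i k\<bar> \<le> e"
    and be: "\<forall>(l,i)\<in>bias_idx L W. \<bar>bs l i - bs' l i\<bar> \<le> e"
begin

lemma pre_step:
  assumes "l < L" "i < nrows L W (Suc l)" "1 \<le> A" "0 \<le> D"
    "\<forall>k<ncols d W (Suc l). actok l k A D"
  shows "preok (Suc l) i (real (d+W) * B * A) (real (d+W) * B * (D + A * e))"
proof -
  define n where "n = ncols d W (Suc l)"
  define M where "M = real (d+W)"
  have nM: "real n + 1 \<le> M" unfolding n_def M_def ncols_def using d1 W1 by auto
  have wk: "\<And>k. k < n \<Longrightarrow> \<bar>Wt (Suc l) i k\<bar> \<le> B \<and> \<bar>Wt' (Suc l) i k\<bar> \<le> B \<and> \<bar>Wt (Suc l) i k - Wt' (Suc l) i k\<bar> \<le> e"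
  proof -
    fix k assume "k < n"
    then have "(Suc l, i, k) \<in> weight_idx d L W" using assms(1,2) unfolding weight_idx_def n_def by auto
    then show "\<bar>Wt (Suc l) i k\<bar> \<le> B \<and> \<bar>Wt' (Suc l) i k\<bar> \<le> B \<and> \<bar>Wt (Suc l) i k - Wt' (Suc l) i k\<bar> \<le> e"
      using wB wB' we by blast
  qed
  have bi: "(Suc l, i) \<in> bias_idx L W" using assms(1,2) unfolding bias_idx_def by auto
  then have bb: "\<bar>bs (Suc l) i\<bar> \<le> B" "\<bar>bs' (Suc l) i\<bar> \<le> B" "\<bar>bs (Suc l) i - bs' (Suc l) i\<bar> \<le> e"
    using bB bB' be by blast+
  have z: "\<bar>0::real\<bar> \<le> B" "\<bar>(0::real) - 0\<bar> \<le> e" using B1 e0 by auto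
  have ak: "\<And>k. k < n \<Longrightarrow> actok l k A D" using assms(5) unfolding n_def by blast
  have num1: "real n * (B * A) + B \<le> M * B * A"
  proof -
    have "B \<le> B * A" using B1 assms(3) by simp
    then have "real n * (B * A) + B \<le> (real n + 1) * (B * A)" by (simp add: algebra_simps)
    also have "\<dots> \<le> M * (B * A)" using nM B1 assms(3) by (intro mult_right_mono) auto
    finally show ?thesis by (simp add: mult.assoc)
  qed
  have num2: "real n * (B * D + A * e) + e \<le> M * B * (D + A * e)"
  proof -
    have ae: "0 \<le> A * e" using assms(3) e0 by simp
    have "A * e \<le> B * (A * e)" using B1 ae mult_right_mono[of 1 B "A*e"] by simp
    have "real n * (A * e) \<le> real n * (B * (A * e))" using \<open>A * e \<le> B * (A * e)\<close> by (simp add: mult_left_mono)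
    moreover have "e \<le> B * (A * e)"
    proof -
      have "e \<le> A * e" using assms(3) e0 by (simp add: mult_le_cancel_right1)
      then show ?thesis using \<open>A * e \<le> B * (A * e)\<close> by linarith
    qed
    moreover have "0 \<le> B * D" using B1 assms(4) by simp
    ultimately have "real n * (B * D + A * e) + e \<le> (real n + 1) * (B * (D + A * e))"
      by (simp add: algebra_simps)
    also have "\<dots> \<le> M * (B * (D + A * e))" using nM B1 assms(4) ae by (intro mult_right_mono) auto
    finally show ?thesis by (simp add: mult.assoc)
  qed
  note LB = lin_bound[where n=n and B=B and A=A]
  note LD = lin_diff[where n=n and B=B and A=A and D=D and e=e]
  have h1: "\<bar>hval d W Wt bs x (Suc l) i\<bar> \<le> M * B * A"
    unfolding hval_Suc' n_def[symmetric]
    by (rule order_trans[OF LB num1]) (use wk ak bb in \<open>auto simp: actok_def\<close>)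
  have h2: "\<bar>hval d W Wt' bs' x (Suc l) i\<bar> \<le> M * B * A"
    unfolding hval_Suc' n_def[symmetric]
    by (rule order_trans[OF LB num1]) (use wk ak bb in \<open>auto simp: actok_def\<close>)
  have h3: "\<bar>hval d W Wt bs x (Suc l) i - hval d W Wt' bs' x (Suc l) i\<bar> \<le> M * B * (D + A * e)"
    unfolding hval_Suc' n_def[symmetric]
    by (rule order_trans[OF LD num2]) (use wk ak bb in \<open>auto simp: actok_def\<close>)
  have h4: "\<bar>hdv d W Wt bs x j (Suc l) i\<bar> \<le> M * B * A"
    unfolding hdv_Suc' n_def[symmetric]
    by (rule order_trans[OF LB num1]) (use wk ak z in \<open>auto simp: actok_def\<close>)
  have h5: "\<bar>hdv d W Wt' bs' x j (Suc l) i\<bar> \<le> M * B * A"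
    unfolding hdv_Suc' n_def[symmetric]
    by (rule order_trans[OF LB num1]) (use wk ak z in \<open>auto simp: actok_def\<close>)
  have h6: "\<bar>hdv d W Wt bs x j (Suc l) i - hdv d W Wt' bs' x j (Suc l) i\<bar> \<le> M * B * (D + A * e)"
    unfolding hdv_Suc' n_def[symmetric]
    by (rule order_trans[OF LD num2]) (use wk ak z in \<open>auto simp: actok_def\<close>)
  have h7: "\<bar>hdd d W Wt bs x j (Suc l) i\<bar> \<le> M * B * A"
    unfolding hdd_Suc' n_def[symmetric]
    by (rule order_trans[OF LB num1]) (use wk ak z in \<open>auto simp: actok_def\<close>)
  have h8: "\<bar>hdd d W Wt' bs' x j (Suc l) i\<bar> \<le> M * B * A"
    unfolding hdd_Suc' n_def[symmetric]
    by (rule order_trans[OF LB num1]) (use wk ak z in \<open>auto simp: actok_def\<close>)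
  have h9: "\<bar>hdd d W Wt bs x j (Suc l) i - hdd d W Wt' bs' x j (Suc l) i\<bar> \<le> M * B * (D + A * e)"
    unfolding hdd_Suc' n_def[symmetric]
    by (rule order_trans[OF LD num2]) (use wk ak z in \<open>auto simp: actok_def\<close>)
  show ?thesis unfolding preok_def M_def[symmetric] using h1 h2 h3 h4 h5 h6 h7 h8 h9 by blast
qed

lemma act_all:
  "l < L \<Longrightarrow> k < (if l = 0 then d else W) \<Longrightarrow> actok l k (Tseq (54 * (real (d+W) * B)) l) (Tseq (54 * (real (d+W) * B)) l * e)"
proof (induction l arbitrary: k)
  case 0
  then have k: "k < d" by simp
  then have "0 \<le> x k" "x k \<le> 1" using xO unfolding Omega_def by auto
  then show ?case unfolding actok_def av_def ad_def add2_def using e0 by auto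
next
  case (Suc l)
  define P where "P = real (d+W) * B"
  define A where "A = Tseq (54 * P) l"
  have P1: "1 \<le> P" unfolding P_def using d1 W1 B1 mult_mono[of 1 "real (d+W)" 1 B] by simp
  have A1: "1 \<le> A" unfolding A_def by (rule Tseq_ge1) (use P1 in simp)
  have kW: "k < nrows L W (Suc l)" using Suc.prems unfolding nrows_def by auto
  have IH: "\<forall>k<ncols d W (Suc l). actok l k A (A * e)"
    using Suc.IH Suc.prems(1) unfolding ncols_def A_def P_def by auto
  have pre: "preok (Suc l) k (P * A) (P * (A * e + A * e))"
    using pre_step[OF _ kW A1 _ IH] Suc.prems(1) A1 e0 unfolding P_def by (simp add: mult.assoc)
  have R1: "1 \<le> P * A" using P1 A1 mult_mono[of 1 P 1 A] by simp
  have act: "actok (Suc l) k (9*(P*A)^3) (27*(P*A)^2*(P * (A * e + A * e)))"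
    by (rule act_step[OF _ pre R1]) simp
  define X where "X = P^3 * A^3"
  have X0: "0 \<le> X" unfolding X_def using P1 A1 by simp
  have Z4: "(54 * P)^4 * A^3 = 54^4 * P * X" unfolding X_def by (simp add: power_mult_distrib eval_nat_numeral)
  have PX: "X \<le> P * X" using P1 X0 mult_right_mono[of 1 P X] by simp
  have n1: "9*(P*A)^3 \<le> (54 * P)^4 * A^3"
  proof -
    have "9*(P*A)^3 = 9 * X" unfolding X_def by (simp add: power_mult_distrib)
    also have "\<dots> \<le> 8503056 * (P * X)" using PX X0 by linarith
    also have "\<dots> = (54 * P)^4 * A^3" unfolding Z4 by simp
    finally show ?thesis .
  qed
  have n2: "27*(P*A)^2*(P * (A * e + A * e)) \<le> (54 * P)^4 * A^3 * e"
  proof -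
    have "27*(P*A)^2*(P * (A * e + A * e)) = 54 * X * e" unfolding X_def by (simp add: power2_eq_square power3_eq_cube algebra_simps)
    also have "\<dots> \<le> 54^4 * P * X * e" using PX X0 e0 P1 by (intro mult_right_mono) auto
    also have "\<dots> = (54 * P)^4 * A^3 * e" using Z4 by simp
    finally show ?thesis .
  qed
  show ?case using actok_mono[OF act n1 n2] unfolding A_def P_def by simp
qed

lemma final_diff:
  assumes "1 \<le> L"
  shows "\<bar>hdd d W Wt bs x j L 0 - hdd d W Wt' bs' x j L 0\<bar> \<le> Tseq (54 * (real (d+W) * B)) L * e"
proof -
  obtain l0 where L: "L = Suc l0" using assms by (cases L) auto
  define P where "P = real (d+W) * B"
  define A where "A = Tseq (54 * P) l0"
  have P1: "1 \<le> P" unfolding P_def using d1 W1 B1 mult_mono[of 1 "real (d+W)" 1 B] by simp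
  have A1: "1 \<le> A" unfolding A_def by (rule Tseq_ge1) (use P1 in simp)
  have kW: "0 < nrows L W (Suc l0)" unfolding nrows_def using W1 by auto
  have IH: "\<forall>k<ncols d W (Suc l0). actok l0 k A (A * e)"
    using act_all[of l0] L unfolding ncols_def A_def P_def by auto
  have pre: "preok (Suc l0) 0 (P * A) (P * (A * e + A * e))"
    using pre_step[OF _ kW A1 _ IH] L A1 e0 unfolding P_def by (simp add: mult.assoc)
  then have "\<bar>hdd d W Wt bs x j L 0 - hdd d W Wt' bs' x j L 0\<bar> \<le> P * (A * e + A * e)"
    unfolding preok_def L by blast
  also have "\<dots> \<le> (54 * P)^4 * A^3 * e"
  proof -
    have ae: "0 \<le> A * e" using A1 e0 by simp
    have "P * (A * e + A * e) = (2 * P) * (A * e)" by simp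
    also have "\<dots> \<le> ((54 * P)^4 * A^2) * (A * e)"
    proof (rule mult_right_mono[OF _ ae])
      have "P \<le> P^4" using power_increasing[of 1 4 P] P1 by simp
      moreover have "0 \<le> P^4" using P1 by simp
      ultimately have "2 * P \<le> 8503056 * P^4" by linarith
      then have "2 * P \<le> 54^4 * P^4" by simp
      also have "\<dots> \<le> 54^4 * P^4 * A^2" using A1 P1 by (simp add: one_le_power)
      finally show "2 * P \<le> (54 * P)^4 * A^2" by (simp add: power_mult_distrib)
    qed
    also have "\<dots> = (54 * P)^4 * A^3 * e" by (simp add: power2_eq_square power3_eq_cube)
    finally show ?thesis .
  qed
  finally show ?thesis unfolding L A_def P_def by simp
qed

end

end



definition Fsp :: "'a set \<Rightarrow> real set \<Rightarrow> nat \<Rightarrow> ('a \<Rightarrow> real) set" where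
  "Fsp I V S = {f. (\<forall>p. p \<notin> I \<longrightarrow> f p = 0) \<and> (\<forall>p\<in>I. f p \<in> V) \<and> card {p\<in>I. f p \<noteq> 0} \<le> S}"

lemma Fsp_card:
  assumes "finite I" "finite V" "0 \<in> V"
  shows "finite (Fsp I V S) \<and> real (card (Fsp I V S)) \<le> (real (card I) * real (card V) + 1)^S"
proof (induction S)
  case 0
  have "Fsp I V 0 \<subseteq> {\<lambda>p. 0}"
  proof
    fix f assume f: "f \<in> Fsp I V 0"
    then have "{p\<in>I. f p \<noteq> 0} = {}" using assms(1) unfolding Fsp_def by auto
    then show "f \<in> {\<lambda>p. 0}" using f unfolding Fsp_def by fastforce
  qed
  then have fin0: "finite (Fsp I V 0)" by (rule finite_subset) simp
  moreover have "card (Fsp I V 0) \<le> 1" using card_mono[OF _ \<open>Fsp I V 0 \<subseteq> {\<lambda>p. 0}\<close>] by simp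
  ultimately show ?case by simp
next
  case (Suc S)
  let ?G = "(\<lambda>(g, p, v). g(p := v)) ` (Fsp I V S \<times> I \<times> V)"
  have sub: "Fsp I V (Suc S) \<subseteq> Fsp I V S \<union> ?G"
  proof
    fix f assume f: "f \<in> Fsp I V (Suc S)"
    show "f \<in> Fsp I V S \<union> ?G"
    proof (cases "card {p\<in>I. f p \<noteq> 0} \<le> S")
      case True then show ?thesis using f unfolding Fsp_def by auto
    next
      case False
      then have "{p\<in>I. f p \<noteq> 0} \<noteq> {}" by (metis card.empty le0)
      then obtain p where p: "p \<in> I" "f p \<noteq> 0" by auto
      define g where "g = f(p := 0)"
      have "{q\<in>I. g q \<noteq> 0} = {q\<in>I. f q \<noteq> 0} - {p}" unfolding g_def by auto
      then have "card {q\<in>I. g q \<noteq> 0} = card {q\<in>I. f q \<noteq> 0} - 1"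
        using p assms(1) card_Diff_singleton[of p "{q\<in>I. f q \<noteq> 0}"] by simp
      then have "g \<in> Fsp I V S" using f assms(3) unfolding Fsp_def g_def by auto
      moreover have "f = g(p := f p)" unfolding g_def by simp
      moreover have "f p \<in> V" using f p unfolding Fsp_def by auto
      ultimately have "f \<in> ?G" using p by (intro image_eqI[where x="(g, p, f p)"]) auto
      then show ?thesis by blast
    qed
  qed
  have fin: "finite (Fsp I V S \<union> ?G)" using Suc.IH assms by auto
  have "card (Fsp I V (Suc S)) \<le> card (Fsp I V S \<union> ?G)" by (rule card_mono[OF fin sub])
  also have "\<dots> \<le> card (Fsp I V S) + card ?G" by (rule card_Un_le)
  also have "\<dots> \<le> card (Fsp I V S) + card (Fsp I V S) * (card I * card V)"
    using card_image_le[of "Fsp I V S \<times> I \<times> V" "\<lambda>(g, p, v). g(p := v)"] Suc.IH assms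
    by (simp add: card_cartesian_product)
  also have "\<dots> = card (Fsp I V S) * (card I * card V + 1)" by (simp add: algebra_simps)
  finally have "real (card (Fsp I V (Suc S))) \<le> real (card (Fsp I V S) * (card I * card V + 1))"
    by (simp only: of_nat_le_iff)
  then have "real (card (Fsp I V (Suc S))) \<le> real (card (Fsp I V S)) * (real (card I) * real (card V) + 1)"
    by (simp add: algebra_simps)
  also have "\<dots> \<le> (real (card I) * real (card V) + 1)^S * (real (card I) * real (card V) + 1)"
    using Suc.IH by (intro mult_right_mono) auto
  finally show ?case using finite_subset[OF sub fin] by (simp add: mult.commute)
qed

lemma lap_lip:
  assumes "1 \<le> d" "1 \<le> W" "1 \<le> B" "0 \<le> e" "x \<in> Omega d"
    "\<forall>(l,i,k)\<in>weight_idx d L W. \<bar>Wt l i k\<bar> \<le> B"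
    "\<forall>(l,i,k)\<in>weight_idx d L W. \<bar>Wt' l i k\<bar> \<le> B"
    "\<forall>(l,i)\<in>bias_idx L W. \<bar>bs l i\<bar> \<le> B"
    "\<forall>(l,i)\<in>bias_idx L W. \<bar>bs' l i\<bar> \<le> B"
    "\<forall>(l,i,k)\<in>weight_idx d L W. \<bar>Wt l i k - Wt' l i k\<bar> \<le> e"
    "\<forall>(l,i)\<in>bias_idx L W. \<bar>bs l i - bs' l i\<bar> \<le> e"
    "1 \<le> L"
  shows "\<bar>laplacian d (\<lambda>x. hval d W Wt bs x L 0) x - laplacian d (\<lambda>x. hval d W Wt' bs' x L 0) x\<bar>
     \<le> real d * (Tseq (54 * (real (d+W) * B)) L * e)"
proof -
  have "\<bar>\<Sum>j<d. hdd d W Wt bs x j L 0 - hdd d W Wt' bs' x j L 0\<bar> \<le> real d * (Tseq (54 * (real (d+W) * B)) L * e)"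
    by (rule sum_abs_bound) (rule final_diff[OF assms])
  then show ?thesis unfolding laplacian_eq by (simp add: sum_subtractf)
qed

definition qz :: "real \<Rightarrow> real \<Rightarrow> real" where
  "qz \<epsilon> w = (if 0 \<le> w then \<epsilon> * of_int \<lfloor>w/\<epsilon>\<rfloor> else - (\<epsilon> * of_int \<lfloor>-w/\<epsilon>\<rfloor>))"

definition Vs :: "real \<Rightarrow> real \<Rightarrow> real set" where
  "Vs \<epsilon> B = (\<lambda>k::int. \<epsilon> * of_int k) ` {-\<lfloor>B/\<epsilon>\<rfloor>..\<lfloor>B/\<epsilon>\<rfloor>}"

lemma qz_pos:
  assumes "0 < \<epsilon>" "0 \<le> w"
  shows "\<bar>\<epsilon> * of_int \<lfloor>w/\<epsilon>\<rfloor> - w\<bar> \<le> \<epsilon>" "\<bar>\<epsilon> * of_int \<lfloor>w/\<epsilon>\<rfloor>\<bar> \<le> w"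
    "0 \<le> \<lfloor>w/\<epsilon>\<rfloor>"
proof -
  have a: "of_int \<lfloor>w/\<epsilon>\<rfloor> \<le> w/\<epsilon>" "w/\<epsilon> < of_int \<lfloor>w/\<epsilon>\<rfloor> + 1" by linarith+
  have "0 \<le> w/\<epsilon>" using assms by simp
  then show k0: "0 \<le> \<lfloor>w/\<epsilon>\<rfloor>" by simp
  have b: "\<epsilon> * of_int \<lfloor>w/\<epsilon>\<rfloor> \<le> w" using mult_left_mono[OF a(1), of \<epsilon>] assms(1) by simp
  have c: "w < \<epsilon> * of_int \<lfloor>w/\<epsilon>\<rfloor> + \<epsilon>" using a(2) assms(1) by (simp add: field_simps)
  have d: "0 \<le> \<epsilon> * of_int \<lfloor>w/\<epsilon>\<rfloor>" using k0 assms(1) by simp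
  show "\<bar>\<epsilon> * of_int \<lfloor>w/\<epsilon>\<rfloor> - w\<bar> \<le> \<epsilon>" using b c by linarith
  show "\<bar>\<epsilon> * of_int \<lfloor>w/\<epsilon>\<rfloor>\<bar> \<le> w" using b d by linarith
qed

lemma qz_props:
  assumes "0 < \<epsilon>"
  shows "\<bar>qz \<epsilon> w - w\<bar> \<le> \<epsilon>" "\<bar>qz \<epsilon> w\<bar> \<le> \<bar>w\<bar>" "qz \<epsilon> 0 = 0"
    "\<bar>w\<bar> \<le> B \<Longrightarrow> qz \<epsilon> w \<in> Vs \<epsilon> B"
proof -
  show "\<bar>qz \<epsilon> w - w\<bar> \<le> \<epsilon>"
  proof (cases "0 \<le> w")
    case True then show ?thesis using qz_pos[OF assms True] unfolding qz_def by simp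
  next
    case False
    then have "0 \<le> -w" by simp
    from qz_pos(1)[OF assms this] False show ?thesis unfolding qz_def by simp
  qed
  show "\<bar>qz \<epsilon> w\<bar> \<le> \<bar>w\<bar>"
  proof (cases "0 \<le> w")
    case True then show ?thesis using qz_pos[OF assms True] unfolding qz_def by simp
  next
    case False
    then have "0 \<le> -w" by simp
    from qz_pos(2)[OF assms this] False show ?thesis unfolding qz_def by simp
  qed
  show "qz \<epsilon> 0 = 0" unfolding qz_def by simp
  assume wB: "\<bar>w\<bar> \<le> B"
  show "qz \<epsilon> w \<in> Vs \<epsilon> B"
  proof (cases "0 \<le> w")
    case True
    have "\<lfloor>w/\<epsilon>\<rfloor> \<le> \<lfloor>B/\<epsilon>\<rfloor>" using wB True assms by (intro floor_mono divide_right_mono) auto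
    moreover have "0 \<le> \<lfloor>w/\<epsilon>\<rfloor>" using qz_pos(3)[OF assms True] .
    ultimately have "-\<lfloor>B/\<epsilon>\<rfloor> \<le> \<lfloor>w/\<epsilon>\<rfloor> \<and> \<lfloor>w/\<epsilon>\<rfloor> \<le> \<lfloor>B/\<epsilon>\<rfloor>" by linarith
    then have "\<lfloor>w/\<epsilon>\<rfloor> \<in> {-\<lfloor>B/\<epsilon>\<rfloor>..\<lfloor>B/\<epsilon>\<rfloor>}" by simp
    then show ?thesis using True unfolding qz_def Vs_def by auto
  next
    case False
    then have w0: "0 \<le> -w" by simp
    have "\<lfloor>-w/\<epsilon>\<rfloor> \<le> \<lfloor>B/\<epsilon>\<rfloor>" using wB False assms by (intro floor_mono divide_right_mono) auto
    moreover have "0 \<le> \<lfloor>-w/\<epsilon>\<rfloor>" using qz_pos(3)[OF assms w0] by simp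
    ultimately have "-\<lfloor>B/\<epsilon>\<rfloor> \<le> - \<lfloor>-w/\<epsilon>\<rfloor> \<and> - \<lfloor>-w/\<epsilon>\<rfloor> \<le> \<lfloor>B/\<epsilon>\<rfloor>" by linarith
    then have "- \<lfloor>-w/\<epsilon>\<rfloor> \<in> {-\<lfloor>B/\<epsilon>\<rfloor>..\<lfloor>B/\<epsilon>\<rfloor>}" by simp
    moreover have "qz \<epsilon> w = \<epsilon> * of_int (- \<lfloor>-w/\<epsilon>\<rfloor>)" using False unfolding qz_def by simp
    ultimately show ?thesis unfolding Vs_def by blast
  qed
qed

lemma Vs_card:
  assumes "0 < \<epsilon>" "0 \<le> B"
  shows "finite (Vs \<epsilon> B)" "0 \<in> Vs \<epsilon> B" "real (card (Vs \<epsilon> B)) \<le> 2 * B / \<epsilon> + 1"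
proof -
  show "finite (Vs \<epsilon> B)" unfolding Vs_def by simp
  have "0 \<le> B/\<epsilon>" using assms by simp
  then have "0 \<le> \<lfloor>B/\<epsilon>\<rfloor>" by simp
  then show "0 \<in> Vs \<epsilon> B" unfolding Vs_def by (intro image_eqI[where x=0]) auto
  have "card (Vs \<epsilon> B) \<le> card {-\<lfloor>B/\<epsilon>\<rfloor>..\<lfloor>B/\<epsilon>\<rfloor>}" unfolding Vs_def by (rule card_image_le) simp
  also have "\<dots> = nat (2 * \<lfloor>B/\<epsilon>\<rfloor> + 1)" by simp
  finally have "real (card (Vs \<epsilon> B)) \<le> real (nat (2 * \<lfloor>B/\<epsilon>\<rfloor> + 1))" by simp
  also have "\<dots> = 2 * of_int \<lfloor>B/\<epsilon>\<rfloor> + 1" using \<open>0 \<le> \<lfloor>B/\<epsilon>\<rfloor>\<close> by simp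
  also have "\<dots> \<le> 2 * B / \<epsilon> + 1" by linarith
  finally show "real (card (Vs \<epsilon> B)) \<le> 2 * B / \<epsilon> + 1" .
qed

definition qW where "qW d L W \<epsilon> Wt = (\<lambda>l i k. if (l,i,k) \<in> weight_idx d L W then qz \<epsilon> (Wt l i k) else 0)"
definition qB where "qB L W \<epsilon> bs = (\<lambda>l i. if (l,i) \<in> bias_idx L W then qz \<epsilon> (bs l i) else (0::real))"

lemma widx_fin: "finite (weight_idx d L W) \<and> card (weight_idx d L W) \<le> (L+1)*(W+1)*(d+W)"
proof -
  have sub: "weight_idx d L W \<subseteq> {..L} \<times> {..<W+1} \<times> {..<d+W}"
    unfolding weight_idx_def nrows_def ncols_def by (auto split: if_splits)
  have "card (weight_idx d L W) \<le> card ({..L} \<times> {..<W+1} \<times> {..<d+W})"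
    by (rule card_mono[OF _ sub]) simp
  moreover have "card ({..L} \<times> {..<W+1} \<times> {..<d+W}) = (L+1)*(W+1)*(d+W)"
    by (simp add: card_cartesian_product algebra_simps)
  ultimately show ?thesis using finite_subset[OF sub] by simp
qed

lemma bidx_fin: "finite (bias_idx L W) \<and> card (bias_idx L W) \<le> (L+1)*(W+1)"
proof -
  have sub: "bias_idx L W \<subseteq> {..L} \<times> {..<W+1}"
    unfolding bias_idx_def nrows_def by (auto split: if_splits)
  have "card (bias_idx L W) \<le> card ({..L} \<times> {..<W+1})"
    by (rule card_mono[OF _ sub]) simp
  then show ?thesis using finite_subset[OF sub] by (simp add: card_cartesian_product)
qed

lemma quant_facts:
  assumes "0 < \<epsilon>"
    and cS: "card {(l, i, j) \<in> weight_idx d L W. Wt l i j \<noteq> 0} + card {(l, i) \<in> bias_idx L W. bs l i \<noteq> 0} \<le> S"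
    and wB: "\<forall>(l, i, j) \<in> weight_idx d L W. \<bar>Wt l i j\<bar> \<le> B"
    and bB: "\<forall>(l, i) \<in> bias_idx L W. \<bar>bs l i\<bar> \<le> B"
  shows "(\<lambda>x. hval d W (qW d L W \<epsilon> Wt) (qB L W \<epsilon> bs) x L 0) \<in> Phi d L W S B"
    "(\<lambda>(l,i,k). qW d L W \<epsilon> Wt l i k) \<in> Fsp (weight_idx d L W) (Vs \<epsilon> B) S"
    "(\<lambda>(l,i). qB L W \<epsilon> bs l i) \<in> Fsp (bias_idx L W) (Vs \<epsilon> B) S"
    "\<forall>(l, i, j) \<in> weight_idx d L W. \<bar>qW d L W \<epsilon> Wt l i j\<bar> \<le> B"
    "\<forall>(l, i) \<in> bias_idx L W. \<bar>qB L W \<epsilon> bs l i\<bar> \<le> B"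
    "\<forall>(l, i, j) \<in> weight_idx d L W. \<bar>Wt l i j - qW d L W \<epsilon> Wt l i j\<bar> \<le> \<epsilon>"
    "\<forall>(l, i) \<in> bias_idx L W. \<bar>bs l i - qB L W \<epsilon> bs l i\<bar> \<le> \<epsilon>"
proof -
  note q = qz_props[OF assms(1)]
  have fw: "finite (weight_idx d L W)" using widx_fin by blast
  have fb: "finite (bias_idx L W)" using bidx_fin by blast
  have c1: "card {(l, i, j) \<in> weight_idx d L W. qW d L W \<epsilon> Wt l i j \<noteq> 0} \<le> card {(l, i, j) \<in> weight_idx d L W. Wt l i j \<noteq> 0}"
    by (rule card_mono) (use fw q(3) in \<open>auto simp: qW_def intro: finite_subset\<close>)
  have c2: "card {(l, i) \<in> bias_idx L W. qB L W \<epsilon> bs l i \<noteq> 0} \<le> card {(l, i) \<in> bias_idx L W. bs l i \<noteq> 0}"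
    by (rule card_mono) (use fb q(3) in \<open>auto simp: qB_def intro: finite_subset\<close>)
  show b1: "\<forall>(l, i, j) \<in> weight_idx d L W. \<bar>qW d L W \<epsilon> Wt l i j\<bar> \<le> B"
    using wB q(2) unfolding qW_def by (fastforce intro: order_trans)
  show b2: "\<forall>(l, i) \<in> bias_idx L W. \<bar>qB L W \<epsilon> bs l i\<bar> \<le> B"
    using bB q(2) unfolding qB_def by (fastforce intro: order_trans)
  show "(\<lambda>x. hval d W (qW d L W \<epsilon> Wt) (qB L W \<epsilon> bs) x L 0) \<in> Phi d L W S B"
    unfolding Phi_def using c1 c2 cS b1 b2 by (intro CollectI exI[of _ "qW d L W \<epsilon> Wt"] exI[of _ "qB L W \<epsilon> bs"]) auto
  show "\<forall>(l, i, j) \<in> weight_idx d L W. \<bar>Wt l i j - qW d L W \<epsilon> Wt l i j\<bar> \<le> \<epsilon>"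
    using q(1) unfolding qW_def by (auto simp: abs_minus_commute)
  show "\<forall>(l, i) \<in> bias_idx L W. \<bar>bs l i - qB L W \<epsilon> bs l i\<bar> \<le> \<epsilon>"
    using q(1) unfolding qB_def by (auto simp: abs_minus_commute)
  have e1: "{p \<in> weight_idx d L W. (\<lambda>(l,i,k). qW d L W \<epsilon> Wt l i k) p \<noteq> 0} = {(l, i, j) \<in> weight_idx d L W. qW d L W \<epsilon> Wt l i j \<noteq> 0}"
    by auto
  have e2: "{p \<in> bias_idx L W. (\<lambda>(l,i). qB L W \<epsilon> bs l i) p \<noteq> 0} = {(l, i) \<in> bias_idx L W. qB L W \<epsilon> bs l i \<noteq> 0}"
    by auto
  have k1: "card {p \<in> weight_idx d L W. (\<lambda>(l,i,k). qW d L W \<epsilon> Wt l i k) p \<noteq> 0} \<le> S"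
    unfolding e1 using c1 cS by linarith
  have k2: "card {p \<in> bias_idx L W. (\<lambda>(l,i). qB L W \<epsilon> bs l i) p \<noteq> 0} \<le> S"
    unfolding e2 using c2 cS by linarith
  show "(\<lambda>(l,i,k). qW d L W \<epsilon> Wt l i k) \<in> Fsp (weight_idx d L W) (Vs \<epsilon> B) S"
    unfolding Fsp_def mem_Collect_eq using k1 wB q(4) by (auto simp: qW_def)
  show "(\<lambda>(l,i). qB L W \<epsilon> bs l i) \<in> Fsp (bias_idx L W) (Vs \<epsilon> B) S"
    unfolding Fsp_def mem_Collect_eq using k2 bB q(4) by (auto simp: qB_def)
qed

lemma card_inj_bound:
  assumes "inj u" "u ` Q \<subseteq> F" "finite F"
  shows "finite Q \<and> card Q \<le> card F"
proof -
  have "finite (u ` Q)" using assms finite_subset by blast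
  then have fQ: "finite Q" using assms(1) finite_imageD inj_on_subset by blast
  have "card Q = card (u ` Q)" using assms(1) by (simp add: card_image inj_on_subset)
  also have "\<dots> \<le> card F" by (rule card_mono[OF assms(3,2)])
  finally show ?thesis using fQ by simp
qed

lemma cover:
  assumes "1 \<le> d" "1 \<le> W" "1 \<le> B" "1 \<le> L" "0 < \<epsilon>"
  shows "\<exists>C. finite C \<and> C \<subseteq> laplacian d ` Phi d L W S B \<and>
     (\<forall>g\<in>laplacian d ` Phi d L W S B. \<exists>c\<in>C. \<forall>x\<in>Omega d. \<bar>g x - c x\<bar> \<le> real d * (Tseq (54*(real(d+W)*B)) L * \<epsilon>)) \<and>
     real (card C) \<le> (real (card (weight_idx d L W)) * real (card (Vs \<epsilon> B)) + 1)^S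
        * (real (card (bias_idx L W)) * real (card (Vs \<epsilon> B)) + 1)^S"
proof -
  define u3 :: "(nat\<Rightarrow>nat\<Rightarrow>nat\<Rightarrow>real) \<Rightarrow> (nat\<times>nat\<times>nat \<Rightarrow> real)" where "u3 = (\<lambda>a. \<lambda>(l,i,k). a l i k)"
  define u2 :: "(nat\<Rightarrow>nat\<Rightarrow>real) \<Rightarrow> (nat\<times>nat \<Rightarrow> real)" where "u2 = (\<lambda>b. \<lambda>(l,i). b l i)"
  define F1 where "F1 = Fsp (weight_idx d L W) (Vs \<epsilon> B) S"
  define F2 where "F2 = Fsp (bias_idx L W) (Vs \<epsilon> B) S"
  define Q1 where "Q1 = {a. u3 a \<in> F1}"
  define Q2 where "Q2 = {b. u2 b \<in> F2}"
  have B0: "0 \<le> B" using assms by simp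
  note VV = Vs_card[OF assms(5) B0]
  have FF1: "finite F1 \<and> real (card F1) \<le> (real (card (weight_idx d L W)) * real (card (Vs \<epsilon> B)) + 1)^S"
    unfolding F1_def by (rule Fsp_card) (use widx_fin VV in auto)
  have FF2: "finite F2 \<and> real (card F2) \<le> (real (card (bias_idx L W)) * real (card (Vs \<epsilon> B)) + 1)^S"
    unfolding F2_def by (rule Fsp_card) (use bidx_fin VV in auto)
  have inj3: "inj u3"
  proof (rule injI)
    fix a b assume "u3 a = u3 b"
    then have "\<And>l i k. u3 a (l,i,k) = u3 b (l,i,k)" by simp
    then show "a = b" unfolding u3_def by (intro ext) simp
  qed
  have inj2: "inj u2"
  proof (rule injI)
    fix a b assume "u2 a = u2 b"
    then have "\<And>l i. u2 a (l,i) = u2 b (l,i)" by simp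
    then show "a = b" unfolding u2_def by (intro ext) simp
  qed
  have QQ1: "finite Q1 \<and> card Q1 \<le> card F1"
    by (rule card_inj_bound[OF inj3]) (use FF1 in \<open>auto simp: Q1_def\<close>)
  have QQ2: "finite Q2 \<and> card Q2 \<le> card F2"
    by (rule card_inj_bound[OF inj2]) (use FF2 in \<open>auto simp: Q2_def\<close>)
  define good where "good Wt bs \<longleftrightarrow>
      card {(l, i, j) \<in> weight_idx d L W. Wt l i j \<noteq> 0} + card {(l, i) \<in> bias_idx L W. bs l i \<noteq> 0} \<le> S
    \<and> (\<forall>(l, i, j) \<in> weight_idx d L W. \<bar>Wt l i j\<bar> \<le> B)
    \<and> (\<forall>(l, i) \<in> bias_idx L W. \<bar>bs l i\<bar> \<le> B)" for Wt bs
  define Q where "Q = {(qW d L W \<epsilon> Wt, qB L W \<epsilon> bs) | Wt bs. good Wt bs}"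
  define net where "net = (\<lambda>(a,b). laplacian d (\<lambda>x. hval d W a b x L 0))"
  define C where "C = net ` Q"
  note qf = quant_facts[OF assms(5)]
  have QsQ: "Q \<subseteq> Q1 \<times> Q2"
  proof
    fix p assume "p \<in> Q"
    then obtain Wt bs where p: "p = (qW d L W \<epsilon> Wt, qB L W \<epsilon> bs)" "good Wt bs" unfolding Q_def by blast
    have "u3 (qW d L W \<epsilon> Wt) \<in> F1" using qf(2)[where Wt=Wt and bs=bs] p(2) unfolding good_def u3_def F1_def by blast
    moreover have "u2 (qB L W \<epsilon> bs) \<in> F2" using qf(3)[where Wt=Wt and bs=bs] p(2) unfolding good_def u2_def F2_def by blast
    ultimately show "p \<in> Q1 \<times> Q2" unfolding p(1) Q1_def Q2_def by simp
  qed
  have finQ: "finite Q" using QQ1 QQ2 QsQ finite_subset by blast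
  have "card C \<le> card Q" unfolding C_def by (rule card_image_le[OF finQ])
  also have "\<dots> \<le> card (Q1 \<times> Q2)" using QQ1 QQ2 QsQ by (intro card_mono) auto
  also have "\<dots> = card Q1 * card Q2" by (simp add: card_cartesian_product)
  finally have "real (card C) \<le> real (card Q1) * real (card Q2)" by (simp flip: of_nat_mult)
  also have "\<dots> \<le> real (card F1) * real (card F2)" using QQ1 QQ2 by (intro mult_mono) auto
  also have "\<dots> \<le> (real (card (weight_idx d L W)) * real (card (Vs \<epsilon> B)) + 1)^S
        * (real (card (bias_idx L W)) * real (card (Vs \<epsilon> B)) + 1)^S"
    using FF1 FF2 by (intro mult_mono) auto
  finally have cardC: "real (card C) \<le> (real (card (weight_idx d L W)) * real (card (Vs \<epsilon> B)) + 1)^S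
        * (real (card (bias_idx L W)) * real (card (Vs \<epsilon> B)) + 1)^S" .
  have CA: "C \<subseteq> laplacian d ` Phi d L W S B"
  proof
    fix c assume "c \<in> C"
    then obtain Wt bs where c: "c = net (qW d L W \<epsilon> Wt, qB L W \<epsilon> bs)" "good Wt bs" unfolding C_def Q_def by blast
    then have "(\<lambda>x. hval d W (qW d L W \<epsilon> Wt) (qB L W \<epsilon> bs) x L 0) \<in> Phi d L W S B"
      using qf(1)[where Wt=Wt and bs=bs] unfolding good_def by blast
    then show "c \<in> laplacian d ` Phi d L W S B" unfolding c(1) net_def by simp
  qed
  have cov: "\<forall>g\<in>laplacian d ` Phi d L W S B. \<exists>c\<in>C. \<forall>x\<in>Omega d. \<bar>g x - c x\<bar> \<le> real d * (Tseq (54*(real(d+W)*B)) L * \<epsilon>)"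
  proof
    fix g assume "g \<in> laplacian d ` Phi d L W S B"
    then obtain F where F: "F \<in> Phi d L W S B" "g = laplacian d F" by blast
    then obtain Wt bs where Wb: "F = (\<lambda>x. hval d W Wt bs x L 0)" "good Wt bs"
      unfolding Phi_def good_def by blast
    have g: "good Wt bs" by (rule Wb(2))
    have "net (qW d L W \<epsilon> Wt, qB L W \<epsilon> bs) \<in> C" unfolding C_def Q_def using g by blast
    moreover have "\<forall>x\<in>Omega d. \<bar>g x - net (qW d L W \<epsilon> Wt, qB L W \<epsilon> bs) x\<bar> \<le> real d * (Tseq (54*(real(d+W)*B)) L * \<epsilon>)"
    proof
      fix x assume x: "x \<in> Omega d"
      show "\<bar>g x - net (qW d L W \<epsilon> Wt, qB L W \<epsilon> bs) x\<bar> \<le> real d * (Tseq (54*(real(d+W)*B)) L * \<epsilon>)"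
      proof -
        from g have g1: "card {(l, i, j) \<in> weight_idx d L W. Wt l i j \<noteq> 0} + card {(l, i) \<in> bias_idx L W. bs l i \<noteq> 0} \<le> S"
          and g2: "\<forall>(l, i, j) \<in> weight_idx d L W. \<bar>Wt l i j\<bar> \<le> B"
          and g3: "\<forall>(l, i) \<in> bias_idx L W. \<bar>bs l i\<bar> \<le> B" unfolding good_def by blast+
        have e0: "0 \<le> \<epsilon>" using assms(5) by simp
        show ?thesis unfolding F(2) Wb(1) net_def prod.case
          by (rule lap_lip[OF assms(1,2,3) e0 x g2 qf(4)[OF g1 g2 g3] g3 qf(5)[OF g1 g2 g3] qf(6)[OF g1 g2 g3] qf(7)[OF g1 g2 g3] assms(4)])
      qed
    qed
    ultimately show "\<exists>c\<in>C. \<forall>x\<in>Omega d. \<bar>g x - c x\<bar> \<le> real d * (Tseq (54*(real(d+W)*B)) L * \<epsilon>)" by blast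
  qed
  show ?thesis using finQ CA cov cardC unfolding C_def by blast
qed

lemma ln_prod6:
  fixes a k b c t \<delta> :: real
  assumes "0 < a" "0 < k" "0 < b" "0 < c" "0 < t" "0 < \<delta>"
  shows "ln (a * k * b * c * t / \<delta>) = ln a + ln k + ln b + ln c + ln t + ln (1/\<delta>)"
  using assms by (simp add: ln_mult ln_div)

lemma lnG_bound:
  fixes c1 :: real and d L W :: nat and B \<delta> T :: real
  assumes d1: "1 \<le> d" and W2: "2 \<le> W" and B1: "1 \<le> B" and L1: "1 \<le> L" and Lc: "real L \<le> c1"
    and dl: "0 < \<delta>" and T1: "1 \<le> T" and TZ: "T \<le> (54 * (real (d+W) * B))^(2*3^L)"
  defines "a \<equiv> ln 4 + ln (c1+1) + ln 2 + ln (real d+1) + ln (real d)"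
    and "b \<equiv> ln 54 + ln (real d + 1)"
  shows "ln (4 * real ((L+1)*(W+1)*(d+W)) * B * real d * T / \<delta>)
     \<le> ln (1/\<delta>) + (a / ln 2 + 4 + 2 * b / ln 2) * (3^L * ln (real W * B))"
proof -
  define lW where "lW = ln (real W)"
  define lB where "lB = ln B"
  define t :: real where "t = 3^L"
  have W0: "0 < real W" using W2 by simp
  have B0: "0 < B" using B1 by simp
  have lW0: "ln 2 \<le> lW" unfolding lW_def using W2 by simp
  have lB0: "0 \<le> lB" unfolding lB_def using B1 by simp
  have lam: "ln (real W * B) = lW + lB" unfolding lW_def lB_def using W0 B0 by (simp add: ln_mult)
  have t1: "1 \<le> t" unfolding t_def by simp
  have ln2: "0 < ln (2::real)" by simp
  have Z0: "0 < 54 * (real (d+W) * B)" using B0 W2 by simp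
  have lK: "ln (real ((L+1)*(W+1)*(d+W))) = ln (real L + 1) + ln (real W + 1) + ln (real d + real W)"
  proof -
    have "real ((L+1)*(W+1)*(d+W)) = (real L + 1) * (real W + 1) * (real d + real W)" by (simp add: algebra_simps)
    also have "ln \<dots> = ln (real L + 1) + ln (real W + 1) + ln (real d + real W)"
      using W2 by (simp add: ln_mult del: of_nat_add)
    finally show ?thesis .
  qed
  have lL: "ln (real L + 1) \<le> ln (c1 + 1)" using Lc by simp
  have lW1: "ln (real W + 1) \<le> ln 2 + lW"
  proof -
    have "real W + 1 \<le> 2 * real W" using W2 by simp
    then have "ln (real W + 1) \<le> ln (2 * real W)" using W2 by simp
    then show ?thesis unfolding lW_def using W0 by (simp add: ln_mult)
  qed
  have ldW: "ln (real d + real W) \<le> ln (real d + 1) + lW"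
  proof -
    have "real d + real W \<le> (real d + 1) * real W" using W2 d1 by (simp add: algebra_simps)
    then have "ln (real d + real W) \<le> ln ((real d + 1) * real W)" using W2 by simp
    then show ?thesis unfolding lW_def using W0 by (simp add: ln_mult)
  qed
  have lZ: "ln (54 * (real (d+W) * B)) = ln 54 + ln (real d + real W) + lB"
    unfolding lB_def using B0 W2 by (simp add: ln_mult)
  have lT: "ln T \<le> 2 * t * ln (54 * (real (d+W) * B))"
  proof -
    have "ln T \<le> ln ((54 * (real (d+W) * B))^(2*3^L))" using T1 TZ by simp
    also have "\<dots> = 2 * t * ln (54 * (real (d+W) * B))" unfolding t_def ln_realpow by simp
    finally show ?thesis .
  qed
  have lnarg: "ln (4 * real ((L+1)*(W+1)*(d+W)) * B * real d * T / \<delta>)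
      = ln 4 + ln (real ((L+1)*(W+1)*(d+W))) + lB + ln (real d) + ln T + ln (1/\<delta>)"
  proof -
    have p1: "0 < real ((L+1)*(W+1)*(d+W))" using W2 by (simp only: of_nat_0_less_iff) simp
    have p2: "0 < real d" using d1 by simp
    have p3: "0 < T" using T1 by simp
    show ?thesis unfolding lB_def by (rule ln_prod6) (use p1 p2 p3 B0 dl in auto)
  qed
  have lZ': "ln (54 * (real (d+W) * B)) \<le> b + lW + lB" unfolding lZ b_def using ldW by linarith
  have tZ: "2 * t * ln (54 * (real (d+W) * B)) \<le> 2 * t * (b + lW + lB)"
    using lZ' t1 by (intro mult_left_mono) auto
  have main: "ln (4 * real ((L+1)*(W+1)*(d+W)) * B * real d * T / \<delta>)
      \<le> ln (1/\<delta>) + a + 2 * (lW + lB) + 2 * t * b + 2 * (t * (lW + lB))"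
  proof -
    have "2 * t * (b + lW + lB) = 2 * t * b + 2 * (t * (lW + lB))" by (simp add: algebra_simps)
    then show ?thesis unfolding lnarg lK a_def using lL lW1 ldW lT tZ lB0 lW0 by (smt (verit))
  qed
  have a0: "0 \<le> a" unfolding a_def using d1 Lc L1 by (simp add: add_nonneg_nonneg)
  have b0: "0 \<le> b" unfolding b_def by simp
  have tl: "ln 2 \<le> t * (lW + lB)"
  proof -
    have "ln 2 \<le> lW + lB" using lW0 lB0 by linarith
    also have "\<dots> \<le> t * (lW + lB)"
    proof -
      have "0 \<le> lW + lB" using lW0 lB0 ln2 by linarith
      from mult_right_mono[OF t1 this] show ?thesis by simp
    qed
    finally show ?thesis .
  qed
  have s1: "a \<le> (a / ln 2) * (t * (lW + lB))"
  proof -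
    have "a = (a / ln 2) * ln 2" using ln2 by simp
    also have "\<dots> \<le> (a / ln 2) * (t * (lW + lB))" using tl a0 ln2 by (intro mult_left_mono) auto
    finally show ?thesis .
  qed
  have s2: "2 * t * b \<le> (2 * b / ln 2) * (t * (lW + lB))"
  proof -
    have "2 * t * b = (2 * b / ln 2) * (t * ln 2)" using ln2 by simp
    also have "\<dots> \<le> (2 * b / ln 2) * (t * (lW + lB))"
      using lW0 lB0 t1 b0 ln2 by (intro mult_left_mono) auto
    finally show ?thesis .
  qed
  have s3: "lW + lB \<le> t * (lW + lB)"
  proof -
    have "0 \<le> lW + lB" using lW0 lB0 ln2 by linarith
    from mult_right_mono[OF t1 this] show ?thesis by simp
  qed
  have "ln (1/\<delta>) + a + 2 * (lW + lB) + 2 * t * b + 2 * (t * (lW + lB))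
      \<le> ln (1/\<delta>) + (a / ln 2 + 4 + 2 * b / ln 2) * (t * (lW + lB))"
    using s1 s2 s3 by (simp add: algebra_simps)
  with main show ?thesis unfolding lam t_def by linarith
qed

lemma core:
  fixes d :: nat and c1 :: real and L W S :: nat and B \<delta> :: real
  assumes d1: "1 \<le> d" and c1: "0 < c1" and L1: "1 \<le> L" and Lc: "real L \<le> c1" and W2: "2 \<le> W"
    and S1: "1 \<le> S" and B1: "1 \<le> B" and dl0: "0 < \<delta>" and dl1: "\<delta> < 1"
  defines "K \<equiv> (ln 4 + ln (c1+1) + ln 2 + ln (real d+1) + ln (real d)) / ln 2 + 4 + 2 * (ln 54 + ln (real d + 1)) / ln 2"
  shows "covering_number d \<delta> (laplacian d ` Phi d L W S B) \<noteq> \<infinity> \<and>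
       ln (real (the_enat (covering_number d \<delta> (laplacian d ` Phi d L W S B))))
         \<le> (2 * K + 2) * real S * (ln (1 / \<delta>) + 3 ^ L * ln (real W * B))"
proof -
  define Z where "Z = 54 * (real (d+W) * B)"
  define T where "T = Tseq Z L"
  have Z1: "1 \<le> Z" unfolding Z_def using B1 W2 mult_mono[of 1 "real (d+W)" 1 B] by simp
  have T1: "1 \<le> T" unfolding T_def by (rule Tseq_ge1[OF Z1])
  have TZ: "T \<le> Z^(2*3^L)"
  proof -
    have "T * 1 \<le> T * Z^2" using T1 Z1 by (intro mult_left_mono) (auto simp: one_le_power)
    also have "\<dots> \<le> Z^(2*3^L)" unfolding T_def by (rule Tseq_closed[OF Z1])
    finally show ?thesis by simp
  qed
  define \<epsilon> where "\<epsilon> = \<delta> / (real d * T)"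
  have dT: "0 < real d * T" using d1 T1 by simp
  have e0: "0 < \<epsilon>" unfolding \<epsilon>_def using dl0 dT by simp
  have dTe: "real d * (T * \<epsilon>) = \<delta>" unfolding \<epsilon>_def using d1 T1 by (simp add: field_simps)
  define A where "A = laplacian d ` Phi d L W S B"
  obtain C where C: "finite C" "C \<subseteq> A"
     "\<forall>g\<in>A. \<exists>c\<in>C. \<forall>x\<in>Omega d. \<bar>g x - c x\<bar> \<le> real d * (T * \<epsilon>)"
     "real (card C) \<le> (real (card (weight_idx d L W)) * real (card (Vs \<epsilon> B)) + 1)^S
        * (real (card (bias_idx L W)) * real (card (Vs \<epsilon> B)) + 1)^S"
    using cover[OF d1 _ B1 L1 e0, of W S] W2 unfolding A_def T_def Z_def by auto
  have Om: "(\<lambda>_. 0) \<in> Omega d" unfolding Omega_def by simp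
  have Cmem: "C \<in> {C. finite C \<and> C \<subseteq> A \<and> (\<forall>g\<in>A. \<exists>c\<in>C. sup_norm_Omega d (\<lambda>x. g x - c x) \<le> \<delta>)}"
  proof -
    have "\<forall>g\<in>A. \<exists>c\<in>C. sup_norm_Omega d (\<lambda>x. g x - c x) \<le> \<delta>"
    proof
      fix g assume "g \<in> A"
      then obtain c where c: "c \<in> C" "\<forall>x\<in>Omega d. \<bar>g x - c x\<bar> \<le> \<delta>" using C(3) dTe by metis
      have "sup_norm_Omega d (\<lambda>x. g x - c x) \<le> \<delta>" unfolding sup_norm_Omega_def
        by (rule cSUP_least) (use Om c(2) in auto)
      then show "\<exists>c\<in>C. sup_norm_Omega d (\<lambda>x. g x - c x) \<le> \<delta>" using c(1) by blast
    qed
    then show ?thesis using C(1,2) by blast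
  qed
  have covle: "covering_number d \<delta> A \<le> enat (card C)"
    unfolding covering_number_def by (rule INF_lower[OF Cmem])
  obtain k where k1: "covering_number d \<delta> A = enat k" using enat_ile[OF covle] by blast
  have k: "covering_number d \<delta> A = enat k" "k \<le> card C" using k1 covle by auto
  define K1 where "K1 = real ((L+1)*(W+1)*(d+W))"
  define X where "X = B * real d * T / \<delta>"
  have X1: "1 \<le> X"
  proof -
    have d1': "1 \<le> real d" using d1 by simp
    have "1 \<le> B * real d" using mult_mono[OF B1 d1'] B1 by simp
    then have "1 \<le> B * real d * T" using mult_mono[OF _ T1, of 1 "B * real d"] by simp
    also have "\<dots> \<le> B * real d * T / \<delta>" using dl0 dl1 B1 d1 T1 by (simp add: le_divide_eq)
    finally show ?thesis unfolding X_def .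
  qed
  have K11: "1 \<le> K1"
  proof -
    have "0 < (L+1)*(W+1)*(d+W)" using W2 by simp
    then have "1 \<le> (L+1)*(W+1)*(d+W)" by linarith
    then show ?thesis unfolding K1_def by (metis of_nat_1 of_nat_le_iff)
  qed
  have cV: "real (card (Vs \<epsilon> B)) \<le> 3 * X"
  proof -
    have "real (card (Vs \<epsilon> B)) \<le> 2 * B / \<epsilon> + 1" using Vs_card[OF e0] B1 by simp
    also have "2 * B / \<epsilon> = 2 * X" unfolding X_def \<epsilon>_def using dl0 dT by (simp add: field_simps)
    finally show ?thesis using X1 by simp
  qed
  have cI1: "real (card (weight_idx d L W)) \<le> K1" unfolding K1_def using widx_fin by (simp only: of_nat_le_iff)
  have cI2: "real (card (bias_idx L W)) \<le> K1"
  proof -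
    have "card (bias_idx L W) \<le> (L+1)*(W+1)" using bidx_fin by blast
    also have "\<dots> = (L+1)*(W+1)*1" by simp
    also have "\<dots> \<le> (L+1)*(W+1)*(d+W)" using W2 by (intro mult_le_mono2) simp
    finally show ?thesis unfolding K1_def by (simp only: of_nat_le_iff)
  qed
  define G where "G = 4 * K1 * X"
  have Gdef: "G = 4 * real ((L+1)*(W+1)*(d+W)) * B * real d * T / \<delta>" unfolding G_def K1_def X_def by simp
  have fac: "real (card I) * real (card (Vs \<epsilon> B)) + 1 \<le> G" if "real (card I) \<le> K1" for I :: "'x set"
  proof -
    have "real (card I) * real (card (Vs \<epsilon> B)) \<le> K1 * (3 * X)" using that cV by (intro mult_mono) auto
    moreover have "1 \<le> K1 * X" using K11 X1 mult_mono[of 1 K1 1 X] by simp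
    ultimately show ?thesis unfolding G_def by simp
  qed
  have G1: "1 \<le> G"
  proof -
    have "0 \<le> real (card (weight_idx d L W)) * real (card (Vs \<epsilon> B))" by simp
    then show ?thesis using fac[OF cI1] by linarith
  qed
  have cardC: "real (card C) \<le> G^S * G^S"
  proof -
    have "real (card C) \<le> (real (card (weight_idx d L W)) * real (card (Vs \<epsilon> B)) + 1)^S
        * (real (card (bias_idx L W)) * real (card (Vs \<epsilon> B)) + 1)^S" by (rule C(4))
    also have "\<dots> \<le> G^S * G^S" using fac[OF cI1] fac[OF cI2] G1
      by (intro mult_mono power_mono) auto
    finally show ?thesis .
  qed
  have lnG: "ln G \<le> ln (1/\<delta>) + K * (3^L * ln (real W * B))"
    unfolding Gdef K_def
    by (rule lnG_bound[OF d1 W2 B1 L1 Lc dl0 T1]) (use TZ in \<open>simp add: Z_def\<close>)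
  have a0: "0 \<le> ln 4 + ln (c1+1) + ln 2 + ln (real d+1) + ln (real d)" using c1 d1 by (simp add: add_nonneg_nonneg)
  have K0: "0 \<le> K"
  proof -
    have "0 \<le> (ln 4 + ln (c1+1) + ln 2 + ln (real d+1) + ln (real d)) / ln 2"
      by (rule divide_nonneg_pos[OF a0]) simp
    moreover have "0 \<le> 2 * (ln 54 + ln (real d + 1)) / ln 2"
      by (rule divide_nonneg_pos) auto
    ultimately show ?thesis unfolding K_def by linarith
  qed
  have ld: "0 \<le> ln (1/\<delta>)" using dl0 dl1 by simp
  have tl: "0 \<le> 3^L * ln (real W * B)"
  proof -
    have W1': "1 \<le> real W" using W2 by simp
    have "1 \<le> real W * B" using mult_mono[OF W1' B1] by simp
    then show ?thesis by (intro mult_nonneg_nonneg) auto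
  qed
  have RHS0: "0 \<le> (2 * K + 2) * real S * (ln (1 / \<delta>) + 3 ^ L * ln (real W * B))"
    using K0 ld tl by simp
  have "ln (real k) \<le> (2 * K + 2) * real S * (ln (1 / \<delta>) + 3 ^ L * ln (real W * B))"
  proof (cases "k = 0")
    case True then show ?thesis using RHS0 by simp
  next
    case False
    have "ln (real k) \<le> ln (G^S * G^S)"
      using False k(2) cardC G1 by (subst ln_le_cancel_iff) auto
    also have "\<dots> = 2 * real S * ln G" using G1 by (simp add: ln_mult ln_realpow)
    also have "\<dots> \<le> 2 * real S * (ln (1/\<delta>) + K * (3^L * ln (real W * B)))"
      using lnG by (intro mult_left_mono) auto
    also have "\<dots> \<le> (2 * K + 2) * real S * (ln (1 / \<delta>) + 3 ^ L * ln (real W * B))"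
    proof -
      have "2 * (ln (1/\<delta>) + K * (3^L * ln (real W * B))) \<le> (2 * K + 2) * (ln (1 / \<delta>) + 3 ^ L * ln (real W * B))"
        using K0 ld tl mult_right_mono[OF _ ld, of 0 K] by (simp add: algebra_simps)
      then have "real S * (2 * (ln (1/\<delta>) + K * (3^L * ln (real W * B)))) \<le> real S * ((2 * K + 2) * (ln (1 / \<delta>) + 3 ^ L * ln (real W * B)))"
        by (rule mult_left_mono) simp
      moreover have "2 * real S * (ln (1/\<delta>) + K * (3^L * ln (real W * B))) = real S * (2 * (ln (1/\<delta>) + K * (3^L * ln (real W * B))))" by simp
      moreover have "(2 * K + 2) * real S * (ln (1 / \<delta>) + 3 ^ L * ln (real W * B)) = real S * ((2 * K + 2) * (ln (1 / \<delta>) + 3 ^ L * ln (real W * B)))" by simp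
      ultimately show ?thesis by linarith
    qed
    finally show ?thesis .
  qed
  then show ?thesis using k(1) unfolding A_def by simp
qed

theorem mainTheorem19:
  fixes d :: nat and c1 :: real
  assumes "d \<ge> 1" and "c1 > 0"
  shows "\<exists>C>0. \<forall>c2>0. \<exists>N0. \<forall>N::real\<ge>N0. \<forall>(L::nat) (W::nat) (S::nat) (B::real) (\<delta>::real).
     1 \<le> L \<and> real L \<le> c1 \<and> 2 \<le> W \<and> real W \<le> c2 * N \<and> 1 \<le> S \<and> real S \<le> c2 * N
     \<and> 1 \<le> B \<and> B \<le> c2 * N \<and> 0 < \<delta> \<and> \<delta> < 1 \<longrightarrow>
       covering_number d \<delta> (laplacian d ` Phi d L W S B) \<noteq> \<infinity> \<and>
       ln (real (the_enat (covering_number d \<delta> (laplacian d ` Phi d L W S B))))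
         \<le> C * real S * (ln (1 / \<delta>) + 3 ^ L * ln (real W * B))"
proof -
  define K where "K = (ln 4 + ln (c1+1) + ln 2 + ln (real d+1) + ln (real d)) / ln 2 + 4 + 2 * (ln 54 + ln (real d + 1)) / ln 2"
  have K0: "0 \<le> K"
  proof -
    have a0: "0 \<le> ln 4 + ln (c1+1) + ln 2 + ln (real d+1) + ln (real d)" using assms by (simp add: add_nonneg_nonneg)
    have "0 \<le> (ln 4 + ln (c1+1) + ln 2 + ln (real d+1) + ln (real d)) / ln 2"
      by (rule divide_nonneg_pos[OF a0]) simp
    moreover have "0 \<le> 2 * (ln 54 + ln (real d + 1)) / ln 2"
      by (rule divide_nonneg_pos) auto
    ultimately show ?thesis unfolding K_def by linarith
  qed
  have main: "covering_number d \<delta> (laplacian d ` Phi d L W S B) \<noteq> \<infinity> \<and>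
       ln (real (the_enat (covering_number d \<delta> (laplacian d ` Phi d L W S B))))
         \<le> (2 * K + 2) * real S * (ln (1 / \<delta>) + 3 ^ L * ln (real W * B))"
    if h: "1 \<le> L \<and> real L \<le> c1 \<and> 2 \<le> W \<and> real W \<le> c2 * N \<and> 1 \<le> S \<and> real S \<le> c2 * N
     \<and> 1 \<le> B \<and> B \<le> c2 * N \<and> 0 < \<delta> \<and> \<delta> < 1" for L W S :: nat and B \<delta> c2 N :: real
    unfolding K_def by (rule core) (use h assms in auto)
  show ?thesis
  proof (rule exI[of _ "2*K+2"], intro conjI allI impI)
    show "0 < 2 * K + 2" using K0 by simp
    fix c2 :: real assume "0 < c2"
    show "\<exists>N0. \<forall>N::real\<ge>N0. \<forall>(L::nat) (W::nat) (S::nat) (B::real) (\<delta>::real).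
     1 \<le> L \<and> real L \<le> c1 \<and> 2 \<le> W \<and> real W \<le> c2 * N \<and> 1 \<le> S \<and> real S \<le> c2 * N
     \<and> 1 \<le> B \<and> B \<le> c2 * N \<and> 0 < \<delta> \<and> \<delta> < 1 \<longrightarrow>
       covering_number d \<delta> (laplacian d ` Phi d L W S B) \<noteq> \<infinity> \<and>
       ln (real (the_enat (covering_number d \<delta> (laplacian d ` Phi d L W S B))))
         \<le> (2 * K + 2) * real S * (ln (1 / \<delta>) + 3 ^ L * ln (real W * B))"
      using main by blast
  qed
qed

end
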